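(* Suppose that the following assumptions hold: (i) $L\in C^1(\mathbb{R}^2;\mathbb{R}^+\cup\{0\})$ is convex in $(x,v)$; (ii) $\Psi\in C^1(\mathbb{R};\mathbb{R}^+\cup\{0\})$ is convex; (iii) for some $C,\tilde C>0$, $\Psi(x)\leqslant C(1+|x|^2)$ and $|\Psi'(x)|\leqslant\tilde C(1+|x|)$ for all $x$; (iv) there exist $\tilde\beta,C>0$ with $L(x,v)\leqslant\tilde\beta(1+|v|^2)$ and $|L_x(x,v)|,|L_v(x,v)|\leqslant C(1+|v|)$ for all $(x,v)$; (v) for some $\alpha>0,\beta\geqslant0$, $\alpha|v|^2-\beta\leqslant L(x,v)$ for all $x,v$. Given an initial condition $x_0\in\mathbb{R}$ and a price process $\varpi\in\mathbb{H}_{\mathbb{F}}$, there exists an optimal control $v^*\in\mathbb{H}_{\mathbb{F}}$ that attains $\inf_{v\in\mathbb{H}_{\mathbb{F}}}\mathbb{E}\left[\int_0^T L(X_t,v_t)+\varpi_tv_t\,dt+\Psi(X_T)\right]$ subject to $dX_t=v_tdt$, $X_0=x_0$. Furthermore, if in addition for some $\theta>0$ the map $v\mapsto L(x,v)-\frac{\theta}{2}|v|^2$ is convex for all $x\in\mathbb{R}$, then $v^*$ is unique.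
   Context: $\mathbb{F}=(\mathcal{F}_t)_{0\leqslant t\leqslant T}$ is the standard filtration generated by a one-dimensional Brownian motion on a complete probability space; $\mathbb{H}_{\mathbb{F}}$ is the Hilbert space of measurable $\mathbb{F}$-adapted real processes $v$ on $[0,T]$ with $\mathbb{E}[\int_0^Tv_t^2dt]<\infty$ and inner product $\mathbb{E}[\int_0^Tv_tw_tdt]$. *)

theory Defs
  imports "HOL-Probability.Probability"
begin

definition brownian_motion :: "'a measure \<Rightarrow> (real \<Rightarrow> 'a \<Rightarrow> real) \<Rightarrow> bool" where
  "brownian_motion M B \<longleftrightarrow>
     prob_space M \<and>
     (\<forall>t\<ge>0. B t \<in> borel_measurable M) \<and>
     (AE \<omega> in M. B 0 \<omega> = 0) \<and>
     (AE \<omega> in M. continuous_on {0..} (\<lambda>t. B t \<omega>)) \<and>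
     (\<forall>s t. 0 \<le> s \<and> s < t \<longrightarrow>
        distributed M lborel (\<lambda>\<omega>. B t \<omega> - B s \<omega>) (normal_density 0 (sqrt (t - s)))) \<and>
     (\<forall>(tt::nat \<Rightarrow> real) n. 0 \<le> tt 0 \<and> (\<forall>i. tt i \<le> tt (Suc i)) \<longrightarrow>
        prob_space.indep_vars M (\<lambda>_. borel) (\<lambda>i \<omega>. B (tt (Suc i)) \<omega> - B (tt i) \<omega>) {..<n})"

definition brownian_filtration :: "'a measure \<Rightarrow> (real \<Rightarrow> 'a \<Rightarrow> real) \<Rightarrow> real \<Rightarrow> 'a measure" where
  "brownian_filtration M B t =
     sigma (space M) ({B s -` A \<inter> space M | s A. s \<in> {0..t} \<and> A \<in> sets borel} \<union> null_sets M)"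

definition time_space :: "real \<Rightarrow> 'a measure \<Rightarrow> (real \<times> 'a) measure" where
  "time_space T M = restrict_space lborel {0..T} \<Otimes>\<^sub>M M"

definition HF :: "'a measure \<Rightarrow> (real \<Rightarrow> 'a measure) \<Rightarrow> real \<Rightarrow> (real \<Rightarrow> 'a \<Rightarrow> real) \<Rightarrow> bool" where
  "HF M F T v \<longleftrightarrow>
     (\<lambda>(t, \<omega>). v t \<omega>) \<in> borel_measurable (time_space T M) \<and>
     (\<forall>t\<in>{0..T}. v t \<in> borel_measurable (F t)) \<and>
     (\<integral>\<^sup>+ p. ennreal ((v (fst p) (snd p))\<^sup>2) \<partial>(time_space T M)) < \<infinity>"

definition state :: "real \<Rightarrow> (real \<Rightarrow> 'a \<Rightarrow> real) \<Rightarrow> real \<Rightarrow> 'a \<Rightarrow> real" where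
  "state x0 v t \<omega> = x0 + set_lebesgue_integral lborel {0..t} (\<lambda>s. v s \<omega>)"

definition cost :: "'a measure \<Rightarrow> real \<Rightarrow> (real \<Rightarrow> real \<Rightarrow> real) \<Rightarrow> (real \<Rightarrow> real)
     \<Rightarrow> (real \<Rightarrow> 'a \<Rightarrow> real) \<Rightarrow> real \<Rightarrow> (real \<Rightarrow> 'a \<Rightarrow> real) \<Rightarrow> real" where
  "cost M T L \<Psi> \<pi> x0 v =
     (\<integral>\<omega>. set_lebesgue_integral lborel {0..T}
              (\<lambda>t. L (state x0 v t \<omega>) (v t \<omega>) + \<pi> t \<omega> * v t \<omega>)
           + \<Psi> (state x0 v T \<omega>) \<partial>M)"

end

theory Submission
  imports Defs
begin



lemma quad_discr:
  fixes A B C :: real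
  assumes "\<And>t. 0 \<le> A + 2 * t * B + t\<^sup>2 * C" and "C \<ge> 0"
  shows "B\<^sup>2 \<le> A * C"
proof (cases "C = 0")
  case True
  have "B = 0"
  proof (rule ccontr)
    assume "B \<noteq> 0"
    have "0 \<le> A + 2 * (- (\<bar>A\<bar> + 1) / B) * B" using assms(1)[of "- (\<bar>A\<bar> + 1) / B"] True by simp
    also have "\<dots> = A - 2 * (\<bar>A\<bar> + 1)" using \<open>B \<noteq> 0\<close> by (simp add: field_simps)
    finally show False by (cases "A \<ge> 0") auto
  qed
  then show ?thesis using True by simp
next
  case False
  then have C: "C > 0" using assms(2) by simp
  have "0 \<le> A + 2 * (-B/C) * B + (-B/C)\<^sup>2 * C" by (rule assms(1))
  also have "\<dots> = A - B\<^sup>2 / C" using C by (simp add: field_simps power2_eq_square)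
  finally have "B\<^sup>2 / C \<le> A" by simp
  then show ?thesis using C by (simp add: field_simps)
qed

lemma CS_integral:
  fixes f g :: "'b \<Rightarrow> real"
  assumes [measurable]: "f \<in> borel_measurable N" "g \<in> borel_measurable N"
    and fi: "integrable N (\<lambda>x. (f x)\<^sup>2)" and gi: "integrable N (\<lambda>x. (g x)\<^sup>2)"
  shows "integrable N (\<lambda>x. f x * g x)"
    and "(\<integral>x. f x * g x \<partial>N)\<^sup>2 \<le> (\<integral>x. (f x)\<^sup>2 \<partial>N) * (\<integral>x. (g x)\<^sup>2 \<partial>N)"
proof -
  have b: "\<bar>f x * g x\<bar> \<le> (f x)\<^sup>2 + (g x)\<^sup>2" for x
  proof -
    have "0 \<le> (\<bar>f x\<bar> - \<bar>g x\<bar>)\<^sup>2" by simp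
    then have "2 * (\<bar>f x\<bar> * \<bar>g x\<bar>) \<le> (f x)\<^sup>2 + (g x)\<^sup>2"
      by (simp add: power2_diff power2_abs)
    moreover have "0 \<le> (f x)\<^sup>2" "0 \<le> (g x)\<^sup>2" "0 \<le> \<bar>f x\<bar> * \<bar>g x\<bar>" by simp_all
    ultimately show ?thesis unfolding abs_mult by linarith
  qed
  show fg: "integrable N (\<lambda>x. f x * g x)"
    by (rule Bochner_Integration.integrable_bound[OF Bochner_Integration.integrable_add[OF fi gi]]) (use b in auto)
  show "(\<integral>x. f x * g x \<partial>N)\<^sup>2 \<le> (\<integral>x. (f x)\<^sup>2 \<partial>N) * (\<integral>x. (g x)\<^sup>2 \<partial>N)"
  proof (rule quad_discr)
    fix t :: real
    have "(\<lambda>x. (f x + t * g x)\<^sup>2) = (\<lambda>x. (f x)\<^sup>2 + 2 * t * (f x * g x) + t\<^sup>2 * (g x)\<^sup>2)"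
      by (auto simp: power2_eq_square algebra_simps)
    then have "(\<integral>x. (f x + t * g x)\<^sup>2 \<partial>N) = (\<integral>x. (f x)\<^sup>2 \<partial>N) + 2 * t * (\<integral>x. f x * g x \<partial>N) + t\<^sup>2 * (\<integral>x. (g x)\<^sup>2 \<partial>N)"
      using fi gi fg by simp
    moreover have "0 \<le> (\<integral>x. (f x + t * g x)\<^sup>2 \<partial>N)" by simp
    ultimately show "0 \<le> (\<integral>x. (f x)\<^sup>2 \<partial>N) + 2 * t * (\<integral>x. f x * g x \<partial>N) + t\<^sup>2 * (\<integral>x. (g x)\<^sup>2 \<partial>N)" by simp
  qed simp
qed

lemma fatou_nn:
  fixes f :: "nat \<Rightarrow> 'b \<Rightarrow> real"
  assumes [measurable]: "\<And>n. f n \<in> borel_measurable N" "g \<in> borel_measurable N"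
    and nn: "\<And>n x. 0 \<le> f n x"
    and lim: "AE x in N. (\<lambda>n. f n x) \<longlonglongrightarrow> g x"
    and bd: "eventually (\<lambda>n. (\<integral>\<^sup>+x. ennreal (f n x) \<partial>N) \<le> c) sequentially"
  shows "(\<integral>\<^sup>+x. ennreal (g x) \<partial>N) \<le> c"
proof -
  have "(\<integral>\<^sup>+x. ennreal (g x) \<partial>N) = (\<integral>\<^sup>+x. liminf (\<lambda>n. ennreal (f n x)) \<partial>N)"
  proof (rule nn_integral_cong_AE)
    show "AE x in N. ennreal (g x) = liminf (\<lambda>n. ennreal (f n x))"
      using lim
    proof eventually_elim
      case (elim x)
      then have "(\<lambda>n. ennreal (f n x)) \<longlonglongrightarrow> ennreal (g x)" by (rule tendsto_ennrealI)
      then show ?case by (simp add: lim_imp_Liminf)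
    qed
  qed
  also have "\<dots> \<le> liminf (\<lambda>n. \<integral>\<^sup>+x. ennreal (f n x) \<partial>N)"
    by (rule nn_integral_liminf) simp
  also have "\<dots> \<le> c" using bd by (simp add: Liminf_le)
  finally show ?thesis .
qed

lemma fatou_real:
  fixes f :: "nat \<Rightarrow> 'b \<Rightarrow> real"
  assumes [measurable]: "\<And>n. integrable N (f n)" "integrable N g"
    and nn: "\<And>n x. 0 \<le> f n x"
    and lim: "AE x in N. (\<lambda>n. f n x) \<longlonglongrightarrow> g x"
    and bd: "\<And>n. (\<integral>x. f n x \<partial>N) \<le> c n" and c: "c \<longlonglongrightarrow> c0"
  shows "(\<integral>x. g x \<partial>N) \<le> c0"
proof (rule field_le_epsilon)
  fix e :: real assume e: "0 < e"
  have gnn: "AE x in N. 0 \<le> g x" using lim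
    by eventually_elim (rule LIMSEQ_le_const, auto simp: nn)
  have ev: "eventually (\<lambda>n. c n < c0 + e) sequentially" using c e
    by (simp add: order_tendstoD(2))
  have "eventually (\<lambda>n. c n \<le> c0 + e) sequentially" using ev by eventually_elim simp
  then obtain n where "c n \<le> c0 + e" by (auto simp: eventually_sequentially)
  moreover have "0 \<le> (\<integral>x. f n x \<partial>N)" by (rule integral_nonneg_AE) (simp add: nn)
  ultimately have c0e: "0 \<le> c0 + e" using bd[of n] by linarith
  have "(\<integral>\<^sup>+x. ennreal (g x) \<partial>N) \<le> ennreal (c0 + e)"
  proof (rule fatou_nn[OF _ _ nn lim])
    show "eventually (\<lambda>n. (\<integral>\<^sup>+x. ennreal (f n x) \<partial>N) \<le> ennreal (c0 + e)) sequentially"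
      using ev
    proof eventually_elim
      case (elim n)
      have "(\<integral>\<^sup>+x. ennreal (f n x) \<partial>N) = ennreal (\<integral>x. f n x \<partial>N)"
        by (rule nn_integral_eq_integral) (auto simp: nn intro: assms(1))
      also have "\<dots> \<le> ennreal (c0 + e)" using bd[of n] elim by (intro ennreal_leI) simp
      finally show ?case .
    qed
  qed auto
  moreover have "(\<integral>\<^sup>+x. ennreal (g x) \<partial>N) = ennreal (\<integral>x. g x \<partial>N)"
    by (rule nn_integral_eq_integral) (auto simp: gnn intro: assms(2))
  ultimately have "(\<integral>x. g x \<partial>N) \<le> c0 + e \<or> ((\<integral>x. g x \<partial>N) \<le> 0 \<and> c0 + e = 0)"
    using c0e by (simp add: ennreal_le_iff2)
  then show "(\<integral>x. g x \<partial>N) \<le> c0 + e" by auto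
qed

lemma convex_bounded_above_const:
  fixes g :: "real \<Rightarrow> real"
  assumes cv: "convex_on UNIV g" and bd: "\<And>x. g x \<le> K"
  shows "g x = g y"
proof -
  have key: "g b \<le> g a" for a b
  proof (rule ccontr)
    assume "\<not> g b \<le> g a"
    then have lt: "g a < g b" by simp
    then have ab: "a \<noteq> b" by auto
    define s where "s = (\<bar>K - g b\<bar> + 1) / (g b - g a)"
    have s: "s > 0" using lt by (simp add: s_def)
    define z where "z = b + s * (b - a)"
    have s1: "1 + s > 0" using s by simp
    have e1: "1 - s/(1+s) = 1/(1+s)" using s1 by (simp add: field_simps)
    have "(1 - s/(1+s)) * z + (s/(1+s)) * a = (z + s * a) / (1 + s)"
      unfolding e1 by (simp add: add_divide_distrib)
    also have "z + s * a = (1 + s) * b" by (simp add: z_def algebra_simps)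
    finally have bz: "b = (1 - s/(1+s)) * z + (s/(1+s)) * a" using s1 by simp
    have t0: "0 \<le> s/(1+s)" and t1: "s/(1+s) \<le> 1" using s s1 by auto
    have "g b \<le> (1 - s/(1+s)) * g z + (s/(1+s)) * g a"
      using convex_onD[OF cv t0 t1, of z a] bz by simp
    then have "(1+s) * g b \<le> (1+s) * ((1 - s/(1+s)) * g z + (s/(1+s)) * g a)"
      using s1 by (intro mult_left_mono) auto
    also have "\<dots> = g z + s * g a" using s1 unfolding e1 by (simp add: distrib_left)
    finally have "(1+s) * g b \<le> g z + s * g a" .
    then have "g b + s * (g b - g a) \<le> g z" by (simp add: algebra_simps)
    moreover have "s * (g b - g a) = \<bar>K - g b\<bar> + 1" using lt by (simp add: s_def)
    ultimately have "g z > K" by linarith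
    with bd show False by (simp add: not_less[symmetric])
  qed
  show ?thesis using key[of x y] key[of y x] by simp
qed




lemma bounded_subseq_conv:
  fixes X :: "nat \<Rightarrow> real"
  assumes "\<And>n. \<bar>X n\<bar> \<le> B"
  shows "\<exists>r L. strict_mono r \<and> (\<lambda>n. X (r n)) \<longlonglongrightarrow> L"
proof -
  obtain r where r: "strict_mono r" "monoseq (\<lambda>n. X (r n))" using seq_monosub by blast
  have "Bseq (\<lambda>n. X (r n))" using assms by (intro BseqI'[of _ B]) auto
  then have "convergent (\<lambda>n. X (r n))" using r(2) Bseq_monoseq_convergent by blast
  then show ?thesis using r(1) by (auto simp: convergent_def)
qed

lemma amgm_abs: fixes x d :: real assumes "x > 0" shows "\<bar>d\<bar> \<le> x * d\<^sup>2 + 1 / x"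
proof -
  have "0 \<le> (x * \<bar>d\<bar> - 1)\<^sup>2" by simp
  then have "2 * (x * \<bar>d\<bar>) \<le> x\<^sup>2 * d\<^sup>2 + 1" by (simp add: power2_diff power_mult_distrib power2_abs)
  then have "2 * (x * \<bar>d\<bar>) / x \<le> (x\<^sup>2 * d\<^sup>2 + 1) / x" using assms by (intro divide_right_mono) auto
  also have "(x\<^sup>2 * d\<^sup>2 + 1) / x = x * d\<^sup>2 + 1/x" using assms by (simp add: field_simps power2_eq_square)
  finally have "2 * \<bar>d\<bar> \<le> x * d\<^sup>2 + 1/x" using assms by simp
  moreover have "0 \<le> \<bar>d\<bar>" by simp
  ultimately show ?thesis by linarith
qed

lemma sq_sum_le: fixes x y :: real shows "(x + y)\<^sup>2 \<le> 2 * x\<^sup>2 + 2 * y\<^sup>2"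
proof -
  have "0 \<le> (x - y)\<^sup>2" by simp
  then show ?thesis by (simp add: power2_sum power2_diff)
qed

locale ctrl =
  fixes M :: "'a measure" and F :: "real \<Rightarrow> 'a measure" and T :: real
    and l \<Psi> :: "real \<Rightarrow> real" and \<pi> :: "real \<Rightarrow> 'a \<Rightarrow> real" and x0 a c b K :: real
  assumes prob: "prob_space M" and Tpos: "0 < T"
    and l_cont: "continuous_on UNIV l" and l_nonneg: "\<And>v. 0 \<le> l v"
    and l_convex: "convex_on UNIV l"
    and l_upper: "\<And>v. l v \<le> b * (1 + v\<^sup>2)" and l_lower: "\<And>v. a * v\<^sup>2 - c \<le> l v"
    and apos: "0 < a"
    and Psi_cont: "continuous_on UNIV \<Psi>" and Psi_nonneg: "\<And>x. 0 \<le> \<Psi> x"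
    and Psi_convex: "convex_on UNIV \<Psi>" and Psi_upper: "\<And>x. \<Psi> x \<le> K * (1 + x\<^sup>2)"
    and price: "HF M F T \<pi>"
begin

abbreviation D where "D \<equiv> restrict_space lborel {0..T}"
abbreviation P where "P \<equiv> time_space T M"

lemma P_eq: "P = D \<Otimes>\<^sub>M M" by (simp add: time_space_def)

lemma Mprob: "prob_space M" by (rule prob)

lemma space_D: "space D = {0..T}" by (simp add: space_restrict_space)

lemma emeasure_D: "emeasure D (space D) = ennreal T"
proof -
  have "emeasure D {0..T} = emeasure lborel {0..T}"
    by (subst emeasure_restrict_space) auto
  then show ?thesis using Tpos by (simp add: space_D)
qed

lemma D_fin: "finite_measure D"
  by (rule finite_measureI) (simp add: emeasure_D[unfolded space_D])

lemma PS: "pair_sigma_finite D M"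
proof -
  interpret DF: finite_measure D by (rule D_fin)
  interpret MP: prob_space M by (rule prob)
  show ?thesis by unfold_locales
qed

lemma emeasure_P: "emeasure P (space P) = ennreal T"
proof -
  interpret PS: pair_sigma_finite D M by (rule PS)
  interpret MP: prob_space M by (rule prob)
  have "space P = space D \<times> space M" by (simp add: P_eq space_pair_measure)
  moreover have "emeasure (D \<Otimes>\<^sub>M M) (space D \<times> space M) = emeasure D (space D) * emeasure M (space M)"
    by (rule PS.M2.emeasure_pair_measure_Times) (rule sets.top)+
  ultimately have "emeasure P (space P) = emeasure D (space D) * emeasure M (space M)"
    by (simp add: P_eq)
  then show ?thesis using emeasure_D[unfolded space_D] MP.emeasure_space_1 by (simp add: space_D)
qed

lemma P_fin: "finite_measure P"
  by (rule finite_measureI) (simp add: emeasure_P)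

lemma measure_P: "measure P (space P) = T"
  using emeasure_P Tpos by (simp add: measure_def)

lemma integral_const_P: "(\<integral>p. k \<partial>P) = k * T"
proof -
  interpret PF: finite_measure P by (rule P_fin)
  show ?thesis by (simp add: measure_P)
qed

lemma integrable_const_P: "integrable P (\<lambda>p. k)"
proof -
  interpret PF: finite_measure P by (rule P_fin)
  show ?thesis by simp
qed

lemma integrable_const_M: "integrable M (\<lambda>p. k)"
proof -
  interpret MP: prob_space M by (rule prob)
  show ?thesis by simp
qed

lemma HF_iff: "HF M F T v \<longleftrightarrow>
   (\<lambda>p. v (fst p) (snd p)) \<in> borel_measurable P \<and>
   (\<forall>t\<in>{0..T}. v t \<in> borel_measurable (F t)) \<and>
   integrable P (\<lambda>p. (v (fst p) (snd p))\<^sup>2)"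
proof -
  have e: "(\<lambda>(t, \<omega>). v t \<omega>) = (\<lambda>p. v (fst p) (snd p))" by (auto simp: fun_eq_iff)
  have i: "integrable P (\<lambda>p. (v (fst p) (snd p))\<^sup>2) \<longleftrightarrow>
     (\<lambda>p. (v (fst p) (snd p))\<^sup>2) \<in> borel_measurable P \<and> (\<integral>\<^sup>+p. ennreal ((v (fst p) (snd p))\<^sup>2) \<partial>P) < \<infinity>"
    unfolding integrable_iff_bounded by simp
  have m: "(\<lambda>p. v (fst p) (snd p)) \<in> borel_measurable P \<Longrightarrow> (\<lambda>p. (v (fst p) (snd p))\<^sup>2) \<in> borel_measurable P"
    by (rule borel_measurable_power)
  show ?thesis unfolding HF_def e i using m by blast
qed

lemma HF_meas: assumes "HF M F T v" shows "(\<lambda>p. v (fst p) (snd p)) \<in> borel_measurable P"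
  using assms unfolding HF_iff by blast

lemma HF_sq: assumes "HF M F T v" shows "integrable P (\<lambda>p. (v (fst p) (snd p))\<^sup>2)"
  using assms unfolding HF_iff by blast

lemma HF_int: assumes v: "HF M F T v" shows "integrable P (\<lambda>p. v (fst p) (snd p))"
proof -
  interpret PF: finite_measure P by (rule P_fin)
  show ?thesis by (rule PF.square_integrable_imp_integrable[OF HF_meas[OF v] HF_sq[OF v]])
qed

lemma HF_prod: assumes v: "HF M F T v" and w: "HF M F T w"
  shows "integrable P (\<lambda>p. v (fst p) (snd p) * w (fst p) (snd p))"
  by (rule CS_integral(1)[OF HF_meas[OF v] HF_meas[OF w] HF_sq[OF v] HF_sq[OF w]])

lemma HF_lin:
  assumes v: "HF M F T v" and w: "HF M F T w"
  shows "HF M F T (\<lambda>t \<omega>. \<alpha> * v t \<omega> + \<beta> * w t \<omega>)"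
  unfolding HF_iff
proof (intro conjI ballI)
  note [measurable] = HF_meas[OF v] HF_meas[OF w]
  show "(\<lambda>p. \<alpha> * v (fst p) (snd p) + \<beta> * w (fst p) (snd p)) \<in> borel_measurable P"
    by (intro borel_measurable_add borel_measurable_times borel_measurable_const HF_meas v w)
  fix t :: real assume "t \<in> {0..T}"
  then have [measurable]: "v t \<in> borel_measurable (F t)" "w t \<in> borel_measurable (F t)"
    using v w by (auto simp: HF_iff)
  show "(\<lambda>\<omega>. \<alpha> * v t \<omega> + \<beta> * w t \<omega>) \<in> borel_measurable (F t)"
    by (intro borel_measurable_add borel_measurable_times borel_measurable_const) simp_all
next
  note [measurable] = HF_meas[OF v] HF_meas[OF w]
  show "integrable P (\<lambda>p. (\<alpha> * v (fst p) (snd p) + \<beta> * w (fst p) (snd p))\<^sup>2)"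
  proof (rule Bochner_Integration.integrable_bound)
    show "integrable P (\<lambda>p. 2 * \<alpha>\<^sup>2 * (v (fst p) (snd p))\<^sup>2 + 2 * \<beta>\<^sup>2 * (w (fst p) (snd p))\<^sup>2)"
      using HF_sq[OF v] HF_sq[OF w] by simp
    show "(\<lambda>p. (\<alpha> * v (fst p) (snd p) + \<beta> * w (fst p) (snd p))\<^sup>2) \<in> borel_measurable P"
      by (intro borel_measurable_power borel_measurable_add borel_measurable_times borel_measurable_const HF_meas v w)
    show "AE p in P. norm ((\<alpha> * v (fst p) (snd p) + \<beta> * w (fst p) (snd p))\<^sup>2)
        \<le> norm (2 * \<alpha>\<^sup>2 * (v (fst p) (snd p))\<^sup>2 + 2 * \<beta>\<^sup>2 * (w (fst p) (snd p))\<^sup>2)"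
    proof (intro AE_I2)
      fix p
      have "(\<alpha> * v (fst p) (snd p) + \<beta> * w (fst p) (snd p))\<^sup>2
        \<le> 2 * (\<alpha> * v (fst p) (snd p))\<^sup>2 + 2 * (\<beta> * w (fst p) (snd p))\<^sup>2" by (rule sq_sum_le)
      then show "norm ((\<alpha> * v (fst p) (snd p) + \<beta> * w (fst p) (snd p))\<^sup>2)
        \<le> norm (2 * \<alpha>\<^sup>2 * (v (fst p) (snd p))\<^sup>2 + 2 * \<beta>\<^sup>2 * (w (fst p) (snd p))\<^sup>2)"
        by (simp add: power_mult_distrib mult.assoc)
    qed
  qed
qed

lemma HF_zero: "HF M F T (\<lambda>t \<omega>. 0)"
  unfolding HF_iff by (simp add: integrable_const_P)

definition NN :: "(real \<Rightarrow> 'a \<Rightarrow> real) \<Rightarrow> real" where "NN v = (\<integral>p. (v (fst p) (snd p))\<^sup>2 \<partial>P)"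
definition I :: "(real \<Rightarrow> 'a \<Rightarrow> real) \<Rightarrow> 'a \<Rightarrow> real" where "I v \<omega> = set_lebesgue_integral lborel {0..T} (\<lambda>s. v s \<omega>)"
definition J :: "(real \<Rightarrow> 'a \<Rightarrow> real) \<Rightarrow> real" where "J v = (\<integral>p. l (v (fst p) (snd p)) \<partial>P)
   + (\<integral>p. \<pi> (fst p) (snd p) * v (fst p) (snd p) \<partial>P) + (\<integral>\<omega>. \<Psi> (x0 + I v \<omega>) \<partial>M)"

lemma NN_nonneg: "0 \<le> NN v" unfolding NN_def by (rule Bochner_Integration.integral_nonneg_AE) auto

lemma I_eq: "I v \<omega> = (\<integral>t. v t \<omega> \<partial>D)"
  unfolding I_def set_lebesgue_integral_def by (subst Bochner_Integration.integral_restrict_space) auto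

lemma meas_slice:
  assumes "HF M F T v" "\<omega> \<in> space M"
  shows "(\<lambda>t. v t \<omega>) \<in> borel_measurable D"
proof -
  have m: "(\<lambda>p. v (fst p) (snd p)) \<in> borel_measurable (D \<Otimes>\<^sub>M M)" using HF_meas[OF assms(1)] by (simp add: P_eq)
  have "(\<lambda>t. (t, \<omega>)) \<in> measurable D (D \<Otimes>\<^sub>M M)"
    by (rule measurable_Pair) (auto intro: measurable_const assms(2))
  from measurable_compose[OF this m] show ?thesis by simp
qed

lemma AE_slice:
  assumes v: "HF M F T v"
  shows "AE \<omega> in M. integrable D (\<lambda>t. v t \<omega>) \<and> integrable D (\<lambda>t. (v t \<omega>)\<^sup>2)"
proof -
  interpret PS: pair_sigma_finite D M by (rule PS)
  have "integrable (D \<Otimes>\<^sub>M M) (case_prod (\<lambda>t \<omega>. v t \<omega>))"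
    using HF_int[OF v] by (simp add: P_eq case_prod_unfold)
  from PS.AE_integrable_snd[OF this] have 1: "AE \<omega> in M. integrable D (\<lambda>t. v t \<omega>)" .
  have "integrable (D \<Otimes>\<^sub>M M) (case_prod (\<lambda>t \<omega>. (v t \<omega>)\<^sup>2))"
    using HF_sq[OF v] by (simp add: P_eq case_prod_unfold)
  from PS.AE_integrable_snd[OF this] have 2: "AE \<omega> in M. integrable D (\<lambda>t. (v t \<omega>)\<^sup>2)" .
  from 1 2 show ?thesis by eventually_elim simp
qed

lemma fubini_P:
  fixes f :: "real \<Rightarrow> 'a \<Rightarrow> real"
  assumes "integrable P (\<lambda>p. f (fst p) (snd p))"
  shows "integrable M (\<lambda>\<omega>. \<integral>t. f t \<omega> \<partial>D)"
    and "(\<integral>\<omega>. (\<integral>t. f t \<omega> \<partial>D) \<partial>M) = (\<integral>p. f (fst p) (snd p) \<partial>P)"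
proof -
  interpret PS: pair_sigma_finite D M by (rule PS)
  have i: "integrable (D \<Otimes>\<^sub>M M) (case_prod f)"
    using assms by (simp add: P_eq case_prod_unfold)
  show "integrable M (\<lambda>\<omega>. \<integral>t. f t \<omega> \<partial>D)" by (rule PS.integrable_snd[OF i])
  show "(\<integral>\<omega>. (\<integral>t. f t \<omega> \<partial>D) \<partial>M) = (\<integral>p. f (fst p) (snd p) \<partial>P)"
    using PS.integral_snd[OF i] by (simp add: P_eq case_prod_unfold)
qed

lemma I_meas: "HF M F T v \<Longrightarrow> I v \<in> borel_measurable M"
  using fubini_P(1)[of "\<lambda>t \<omega>. v t \<omega>"] HF_int by (simp add: I_eq[abs_def])

lemma I_lin:
  assumes v: "HF M F T v" and w: "HF M F T w"
  shows "AE \<omega> in M. I (\<lambda>t \<omega>. \<alpha> * v t \<omega> + \<beta> * w t \<omega>) \<omega> = \<alpha> * I v \<omega> + \<beta> * I w \<omega>"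
  using AE_slice[OF v] AE_slice[OF w]
  by eventually_elim (simp add: I_eq)

lemma I_sq:
  assumes v: "HF M F T v"
  shows "AE \<omega> in M. (I v \<omega>)\<^sup>2 \<le> T * (\<integral>t. (v t \<omega>)\<^sup>2 \<partial>D)"
  using AE_slice[OF v] AE_space
proof eventually_elim
  case (elim \<omega>)
  interpret DF: finite_measure D by (rule D_fin)
  have "(\<integral>t. 1 * v t \<omega> \<partial>D)\<^sup>2 \<le> (\<integral>t. 1\<^sup>2 \<partial>D) * (\<integral>t. (v t \<omega>)\<^sup>2 \<partial>D)"
  proof (rule CS_integral(2))
    show "(\<lambda>t. 1::real) \<in> borel_measurable D" by simp
    show "(\<lambda>t. v t \<omega>) \<in> borel_measurable D" using meas_slice[OF v] elim by blast
    show "integrable D (\<lambda>t. (1::real)\<^sup>2)" by (rule DF.integrable_const)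
    show "integrable D (\<lambda>t. (v t \<omega>)\<^sup>2)" using elim by blast
  qed
  moreover have "(\<integral>t. (1::real)\<^sup>2 \<partial>D) = T"
    using emeasure_D Tpos by (simp add: measure_def)
  ultimately show ?case by (simp add: I_eq)
qed

lemma I_abs:
  assumes v: "HF M F T v"
  shows "\<bar>I v \<omega>\<bar> \<le> (\<integral>t. \<bar>v t \<omega>\<bar> \<partial>D)"
  by (simp add: I_eq)

lemma Psi_int:
  assumes v: "HF M F T v"
  shows "integrable M (\<lambda>\<omega>. \<Psi> (x0 + I v \<omega>))"
proof (rule Bochner_Integration.integrable_bound)
  have Kn: "0 \<le> K" using Psi_upper[of 0] Psi_nonneg[of 0] by simp
  show "integrable M (\<lambda>\<omega>. K * (1 + 2 * x0\<^sup>2) + 2 * K * T * (\<integral>t. (v t \<omega>)\<^sup>2 \<partial>D))"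
  proof (rule Bochner_Integration.integrable_add[OF integrable_const_M], rule integrable_mult_right)
    have "integrable M (\<lambda>\<omega>. \<integral>t. (\<lambda>t \<omega>. (v t \<omega>)\<^sup>2) t \<omega> \<partial>D)"
      by (rule fubini_P(1)) (rule HF_sq[OF v])
    then show "integrable M (\<lambda>\<omega>. \<integral>t. (v t \<omega>)\<^sup>2 \<partial>D)" by simp
  qed
  have [measurable]: "\<Psi> \<in> borel_measurable borel" using Psi_cont by (rule borel_measurable_continuous_onI)
  have [measurable]: "I v \<in> borel_measurable M" by (rule I_meas[OF v])
  show "(\<lambda>\<omega>. \<Psi> (x0 + I v \<omega>)) \<in> borel_measurable M"
    by (rule measurable_compose[of "\<lambda>\<omega>. x0 + I v \<omega>" _ borel \<Psi>])
      (intro borel_measurable_add borel_measurable_const I_meas v, fact)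
  show "AE \<omega> in M. norm (\<Psi> (x0 + I v \<omega>)) \<le> norm (K * (1 + 2 * x0\<^sup>2) + 2 * K * T * (\<integral>t. (v t \<omega>)\<^sup>2 \<partial>D))"
    using I_sq[OF v]
  proof eventually_elim
    case (elim \<omega>)
    let ?Q = "\<integral>t. (v t \<omega>)\<^sup>2 \<partial>D"
    let ?R = "K * (1 + 2 * x0\<^sup>2) + 2 * K * T * ?Q"
    have 1: "\<Psi> (x0 + I v \<omega>) \<le> K * (1 + (x0 + I v \<omega>)\<^sup>2)" by (rule Psi_upper)
    have 2: "(x0 + I v \<omega>)\<^sup>2 \<le> 2 * x0\<^sup>2 + 2 * (I v \<omega>)\<^sup>2" by (rule sq_sum_le)
    have 3: "K * (1 + (x0 + I v \<omega>)\<^sup>2) \<le> K * (1 + 2 * x0\<^sup>2 + 2 * (T * ?Q))"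
      by (rule mult_left_mono[OF _ Kn]) (use 2 elim in linarith)
    have 4: "K * (1 + 2 * x0\<^sup>2 + 2 * (T * ?Q)) = ?R" by (simp add: algebra_simps)
    have "\<Psi> (x0 + I v \<omega>) \<le> ?R" using 1 3 4 by linarith
    moreover have "norm (\<Psi> (x0 + I v \<omega>)) = \<Psi> (x0 + I v \<omega>)" using Psi_nonneg[of "x0 + I v \<omega>"] by simp
    moreover have "?R \<le> norm ?R" by simp
    ultimately show ?case by linarith
  qed
qed

lemma l_meas[measurable]: "l \<in> borel_measurable borel"
  using l_cont by (rule borel_measurable_continuous_onI)

lemma l_int:
  assumes v: "HF M F T v"
  shows "integrable P (\<lambda>p. l (v (fst p) (snd p)))"
proof (rule Bochner_Integration.integrable_bound)
  note [measurable] = HF_meas[OF v]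
  show "integrable P (\<lambda>p. b + b * (v (fst p) (snd p))\<^sup>2)"
    by (rule Bochner_Integration.integrable_add[OF integrable_const_P], rule integrable_mult_right)
      (rule HF_sq[OF v])
  show "(\<lambda>p. l (v (fst p) (snd p))) \<in> borel_measurable P"
    by (rule measurable_compose[OF HF_meas[OF v] l_meas])
  show "AE p in P. norm (l (v (fst p) (snd p))) \<le> norm (b + b * (v (fst p) (snd p))\<^sup>2)"
  proof (intro AE_I2)
    fix p
    have "l (v (fst p) (snd p)) \<le> b + b * (v (fst p) (snd p))\<^sup>2"
      using l_upper[of "v (fst p) (snd p)"] by (simp add: algebra_simps)
    moreover have "norm (l (v (fst p) (snd p))) = l (v (fst p) (snd p))" using l_nonneg[of "v (fst p) (snd p)"] by simp
    moreover have "b + b * (v (fst p) (snd p))\<^sup>2 \<le> norm (b + b * (v (fst p) (snd p))\<^sup>2)" by simp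
    ultimately show "norm (l (v (fst p) (snd p))) \<le> norm (b + b * (v (fst p) (snd p))\<^sup>2)" by linarith
  qed
qed

lemma pi_HF: "HF M F T \<pi>" by (rule price)

lemma pi_int: "HF M F T v \<Longrightarrow> integrable P (\<lambda>p. \<pi> (fst p) (snd p) * v (fst p) (snd p))"
  by (rule HF_prod[OF price])

end


context ctrl begin

lemma HF_diff: assumes v: "HF M F T v" and w: "HF M F T w" shows "HF M F T (\<lambda>t \<omega>. v t \<omega> - w t \<omega>)"
  using HF_lin[OF v w, of 1 "-1"] by simp

lemma HF_mid: assumes v: "HF M F T v" and w: "HF M F T w"
  shows "HF M F T (\<lambda>t \<omega>. 1/2 * v t \<omega> + 1/2 * w t \<omega>)"
  by (rule HF_lin[OF v w])

lemma l_le_int_mono: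
  fixes f g :: "real \<times> 'a \<Rightarrow> real"
  assumes "integrable P f" "integrable P g" "\<And>p. f p \<le> g p"
  shows "(\<integral>p. f p \<partial>P) \<le> (\<integral>p. g p \<partial>P)"
  using assms by (intro Bochner_Integration.integral_mono) auto

lemma parallelogram:
  assumes v: "HF M F T v" and w: "HF M F T w"
  shows "NN (\<lambda>t \<omega>. v t \<omega> - w t \<omega>) = 2 * NN v + 2 * NN w - 4 * NN (\<lambda>t \<omega>. 1/2 * v t \<omega> + 1/2 * w t \<omega>)"
proof -
  have iv: "integrable P (\<lambda>p. (v (fst p) (snd p))\<^sup>2)" by (rule HF_sq[OF v])
  have iw: "integrable P (\<lambda>p. (w (fst p) (snd p))\<^sup>2)" by (rule HF_sq[OF w])
  have im: "integrable P (\<lambda>p. (1/2 * v (fst p) (snd p) + 1/2 * w (fst p) (snd p))\<^sup>2)"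
    using HF_sq[OF HF_mid[OF v w]] by simp
  have eq: "(\<lambda>p. (v (fst p) (snd p) - w (fst p) (snd p))\<^sup>2) =
     (\<lambda>p. 2 * (v (fst p) (snd p))\<^sup>2 + 2 * (w (fst p) (snd p))\<^sup>2 - 4 * (1/2 * v (fst p) (snd p) + 1/2 * w (fst p) (snd p))\<^sup>2)"
    by (auto simp: fun_eq_iff power2_eq_square algebra_simps)
  have "NN (\<lambda>t \<omega>. v t \<omega> - w t \<omega>) = (\<integral>p. 2 * (v (fst p) (snd p))\<^sup>2 + 2 * (w (fst p) (snd p))\<^sup>2 - 4 * (1/2 * v (fst p) (snd p) + 1/2 * w (fst p) (snd p))\<^sup>2 \<partial>P)"
    unfolding NN_def eq ..
  also have "\<dots> = 2 * NN v + 2 * NN w - 4 * NN (\<lambda>t \<omega>. 1/2 * v t \<omega> + 1/2 * w t \<omega>)"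
  proof -
    have i1: "integrable P (\<lambda>p. 2 * (v (fst p) (snd p))\<^sup>2 + 2 * (w (fst p) (snd p))\<^sup>2)"
      by (intro Bochner_Integration.integrable_add integrable_mult_right iv iw)
    have i2: "integrable P (\<lambda>p. 4 * (1/2 * v (fst p) (snd p) + 1/2 * w (fst p) (snd p))\<^sup>2)"
      by (intro integrable_mult_right im)
    have "(\<integral>p. 2 * (v (fst p) (snd p))\<^sup>2 + 2 * (w (fst p) (snd p))\<^sup>2 - 4 * (1/2 * v (fst p) (snd p) + 1/2 * w (fst p) (snd p))\<^sup>2 \<partial>P)
      = (\<integral>p. 2 * (v (fst p) (snd p))\<^sup>2 + 2 * (w (fst p) (snd p))\<^sup>2 \<partial>P) - (\<integral>p. 4 * (1/2 * v (fst p) (snd p) + 1/2 * w (fst p) (snd p))\<^sup>2 \<partial>P)"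
      by (rule Bochner_Integration.integral_diff[OF i1 i2])
    also have "(\<integral>p. 2 * (v (fst p) (snd p))\<^sup>2 + 2 * (w (fst p) (snd p))\<^sup>2 \<partial>P)
      = (\<integral>p. 2 * (v (fst p) (snd p))\<^sup>2 \<partial>P) + (\<integral>p. 2 * (w (fst p) (snd p))\<^sup>2 \<partial>P)"
      by (rule Bochner_Integration.integral_add) (intro integrable_mult_right iv iw)+
    finally show ?thesis unfolding NN_def by simp
  qed
  finally show ?thesis .
qed

lemma J_mid:
  assumes v: "HF M F T v" and w: "HF M F T w" and kap: "0 \<le> \<kappa>"
    and lk: "\<And>x y. l (1/2 * x + 1/2 * y) + \<kappa> * (x - y)\<^sup>2 \<le> (l x + l y) / 2"
  shows "J (\<lambda>t \<omega>. 1/2 * v t \<omega> + 1/2 * w t \<omega>) + \<kappa> * NN (\<lambda>t \<omega>. v t \<omega> - w t \<omega>) \<le> (J v + J w) / 2"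
proof -
  define m where "m = (\<lambda>t \<omega>. 1/2 * v t \<omega> + 1/2 * w t \<omega>)"
  have m: "HF M F T m" unfolding m_def by (rule HF_mid[OF v w])
  have d: "HF M F T (\<lambda>t \<omega>. v t \<omega> - w t \<omega>)" by (rule HF_diff[OF v w])
  have lm: "integrable P (\<lambda>p. l (1/2 * v (fst p) (snd p) + 1/2 * w (fst p) (snd p)))"
    using l_int[OF m] by (simp add: m_def)
  have dm: "integrable P (\<lambda>p. (v (fst p) (snd p) - w (fst p) (snd p))\<^sup>2)"
    using HF_sq[OF d] by simp
  have A: "(\<integral>p. l (m (fst p) (snd p)) \<partial>P) + \<kappa> * NN (\<lambda>t \<omega>. v t \<omega> - w t \<omega>)
      \<le> ((\<integral>p. l (v (fst p) (snd p)) \<partial>P) + (\<integral>p. l (w (fst p) (snd p)) \<partial>P)) / 2"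
  proof -
    have "(\<integral>p. l (m (fst p) (snd p)) \<partial>P) + \<kappa> * NN (\<lambda>t \<omega>. v t \<omega> - w t \<omega>)
       = (\<integral>p. l (1/2 * v (fst p) (snd p) + 1/2 * w (fst p) (snd p)) + \<kappa> * (v (fst p) (snd p) - w (fst p) (snd p))\<^sup>2 \<partial>P)"
      unfolding NN_def m_def
      by (subst Bochner_Integration.integral_add[OF lm integrable_mult_right[OF dm]]) simp
    also have "\<dots> \<le> (\<integral>p. (l (v (fst p) (snd p)) + l (w (fst p) (snd p))) / 2 \<partial>P)"
    proof (rule l_le_int_mono)
      show "integrable P (\<lambda>p. l (1/2 * v (fst p) (snd p) + 1/2 * w (fst p) (snd p)) + \<kappa> * (v (fst p) (snd p) - w (fst p) (snd p))\<^sup>2)"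
        by (rule Bochner_Integration.integrable_add[OF lm integrable_mult_right[OF dm]])
      show "integrable P (\<lambda>p. (l (v (fst p) (snd p)) + l (w (fst p) (snd p))) / 2)"
        by (rule integrable_divide_zero, rule Bochner_Integration.integrable_add[OF l_int[OF v] l_int[OF w]])
      show "\<And>p. l (1/2 * v (fst p) (snd p) + 1/2 * w (fst p) (snd p)) + \<kappa> * (v (fst p) (snd p) - w (fst p) (snd p))\<^sup>2
         \<le> (l (v (fst p) (snd p)) + l (w (fst p) (snd p))) / 2" by (rule lk)
    qed
    also have "\<dots> = ((\<integral>p. l (v (fst p) (snd p)) \<partial>P) + (\<integral>p. l (w (fst p) (snd p)) \<partial>P)) / 2"
      by (subst integral_divide_zero, subst Bochner_Integration.integral_add[OF l_int[OF v] l_int[OF w]]) (rule refl)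
    finally show ?thesis .
  qed
  have B: "(\<integral>p. \<pi> (fst p) (snd p) * m (fst p) (snd p) \<partial>P)
     = ((\<integral>p. \<pi> (fst p) (snd p) * v (fst p) (snd p) \<partial>P) + (\<integral>p. \<pi> (fst p) (snd p) * w (fst p) (snd p) \<partial>P)) / 2"
  proof -
    have "(\<lambda>p. \<pi> (fst p) (snd p) * m (fst p) (snd p)) = (\<lambda>p. (\<pi> (fst p) (snd p) * v (fst p) (snd p) + \<pi> (fst p) (snd p) * w (fst p) (snd p)) / 2)"
      by (auto simp: m_def fun_eq_iff algebra_simps)
    then show ?thesis
      by (simp only:, subst integral_divide_zero, subst Bochner_Integration.integral_add[OF pi_int[OF v] pi_int[OF w]]) (rule refl)
  qed
  have C: "(\<integral>\<omega>. \<Psi> (x0 + I m \<omega>) \<partial>M) \<le> ((\<integral>\<omega>. \<Psi> (x0 + I v \<omega>) \<partial>M) + (\<integral>\<omega>. \<Psi> (x0 + I w \<omega>) \<partial>M)) / 2"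
  proof -
    have "(\<integral>\<omega>. \<Psi> (x0 + I m \<omega>) \<partial>M) \<le> (\<integral>\<omega>. (\<Psi> (x0 + I v \<omega>) + \<Psi> (x0 + I w \<omega>)) / 2 \<partial>M)"
    proof (rule integral_mono_AE)
      show "integrable M (\<lambda>\<omega>. \<Psi> (x0 + I m \<omega>))" by (rule Psi_int[OF m])
      show "integrable M (\<lambda>\<omega>. (\<Psi> (x0 + I v \<omega>) + \<Psi> (x0 + I w \<omega>)) / 2)"
        by (rule integrable_divide_zero, rule Bochner_Integration.integrable_add[OF Psi_int[OF v] Psi_int[OF w]])
      show "AE \<omega> in M. \<Psi> (x0 + I m \<omega>) \<le> (\<Psi> (x0 + I v \<omega>) + \<Psi> (x0 + I w \<omega>)) / 2"
        using I_lin[OF v w, of "1/2" "1/2"]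
      proof eventually_elim
        case (elim \<omega>)
        have e: "x0 + I m \<omega> = (1 - 1/2) *\<^sub>R (x0 + I v \<omega>) + (1/2) *\<^sub>R (x0 + I w \<omega>)"
          using elim by (simp add: m_def algebra_simps)
        have "\<Psi> ((1 - 1/2) *\<^sub>R (x0 + I v \<omega>) + (1/2) *\<^sub>R (x0 + I w \<omega>)) \<le> (1 - 1/2) * \<Psi> (x0 + I v \<omega>) + (1/2) * \<Psi> (x0 + I w \<omega>)"
          by (rule convex_onD[OF Psi_convex]) auto
        then show ?case unfolding e by simp
      qed
    qed
    also have "\<dots> = ((\<integral>\<omega>. \<Psi> (x0 + I v \<omega>) \<partial>M) + (\<integral>\<omega>. \<Psi> (x0 + I w \<omega>) \<partial>M)) / 2"
      by (subst integral_divide_zero, subst Bochner_Integration.integral_add[OF Psi_int[OF v] Psi_int[OF w]]) (rule refl)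
    finally show ?thesis .
  qed
  have key: "x1 + x2 + x3 + n \<le> (y1 + y2 + y3 + (z1 + z2 + z3)) / 2"
    if "x1 + n \<le> (y1+z1)/2" "x2 = (y2+z2)/2" "x3 \<le> (y3+z3)/2"
    for x1 x2 x3 y1 y2 y3 z1 z2 z3 n :: real using that by (simp add: field_simps)
  have "J m + \<kappa> * NN (\<lambda>t \<omega>. v t \<omega> - w t \<omega>) \<le> (J v + J w) / 2"
    unfolding J_def by (rule key[OF A B C])
  then show ?thesis by (simp add: m_def)
qed

lemma J_lower:
  assumes v: "HF M F T v"
  shows "a / 2 * NN v - (c * T + NN \<pi> / (2 * a)) \<le> J v"
proof -
  have pw: "a / 2 * x\<^sup>2 - c - y\<^sup>2 / (2 * a) \<le> l x + y * x" for x y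
  proof -
    have "(a * x + y)\<^sup>2 / (2 * a) = a / 2 * x\<^sup>2 + y * x + y\<^sup>2 / (2 * a)"
      using apos by (simp add: field_simps power2_eq_square)
    moreover have "0 \<le> (a * x + y)\<^sup>2 / (2 * a)" using apos by simp
    moreover have "a * x\<^sup>2 - c \<le> l x" by (rule l_lower)
    moreover have "0 \<le> a / 2 * x\<^sup>2" using apos by simp
    ultimately show ?thesis by linarith
  qed
  have iq: "integrable P (\<lambda>p. a / 2 * (v (fst p) (snd p))\<^sup>2 - c - (\<pi> (fst p) (snd p))\<^sup>2 / (2 * a))"
    by (intro Bochner_Integration.integrable_diff integrable_mult_right integrable_divide_zero integrable_const_P HF_sq[OF v] HF_sq[OF price])
  have "a / 2 * NN v - (c * T + NN \<pi> / (2 * a)) = (\<integral>p. a / 2 * (v (fst p) (snd p))\<^sup>2 - c - (\<pi> (fst p) (snd p))\<^sup>2 / (2 * a) \<partial>P)"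
    unfolding NN_def
    by (subst Bochner_Integration.integral_diff, rule Bochner_Integration.integrable_diff,
        rule integrable_mult_right, rule HF_sq[OF v], rule integrable_const_P,
        rule integrable_divide_zero, rule HF_sq[OF price],
        subst Bochner_Integration.integral_diff, rule integrable_mult_right, rule HF_sq[OF v], rule integrable_const_P)
       (simp add: measure_P)
  also have "\<dots> \<le> (\<integral>p. l (v (fst p) (snd p)) + \<pi> (fst p) (snd p) * v (fst p) (snd p) \<partial>P)"
    by (rule l_le_int_mono[OF iq Bochner_Integration.integrable_add[OF l_int[OF v] pi_int[OF v]]]) (rule pw)
  also have "\<dots> = (\<integral>p. l (v (fst p) (snd p)) \<partial>P) + (\<integral>p. \<pi> (fst p) (snd p) * v (fst p) (snd p) \<partial>P)"
    by (rule Bochner_Integration.integral_add[OF l_int[OF v] pi_int[OF v]])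
  also have "\<dots> \<le> J v"
  proof -
    have "0 \<le> (\<integral>\<omega>. \<Psi> (x0 + I v \<omega>) \<partial>M)" by (rule Bochner_Integration.integral_nonneg_AE) (simp add: Psi_nonneg)
    then show ?thesis unfolding J_def by linarith
  qed
  finally show ?thesis .
qed

end


context ctrl begin

lemma complete:
  fixes u :: "nat \<Rightarrow> real \<Rightarrow> 'a \<Rightarrow> real"
  assumes u: "\<And>n. HF M F T (u n)"
    and cau: "\<And>e. 0 < e \<Longrightarrow> \<exists>N. \<forall>n\<ge>N. \<forall>k\<ge>N. NN (\<lambda>t \<omega>. u n t \<omega> - u k t \<omega>) < e"
  shows "\<exists>v r. HF M F T v \<and> strict_mono r \<and> (\<lambda>n. NN (\<lambda>t \<omega>. u (r n) t \<omega> - v t \<omega>)) \<longlonglongrightarrow> 0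
         \<and> (AE p in P. (\<lambda>n. u (r n) (fst p) (snd p)) \<longlonglongrightarrow> v (fst p) (snd p))"
proof -
  have "\<forall>j. \<exists>N. \<forall>n\<ge>N. \<forall>k\<ge>N. NN (\<lambda>t \<omega>. u n t \<omega> - u k t \<omega>) < (1/8)^j"
    using cau by simp
  then obtain Kf :: "nat \<Rightarrow> nat" where Kf: "\<And>j n k. Kf j \<le> n \<Longrightarrow> Kf j \<le> k \<Longrightarrow> NN (\<lambda>t \<omega>. u n t \<omega> - u k t \<omega>) < (1/8)^j"
    by metis
  define r where "r j = (\<Sum>i\<le>j. Kf i) + j" for j
  have r_ge: "Kf j \<le> r j" for j
  proof -
    have "Kf j \<le> (\<Sum>i\<le>j. Kf i)" by (rule member_le_sum) auto
    then show ?thesis by (simp add: r_def)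
  qed
  have r_mono: "strict_mono r" unfolding strict_mono_Suc_iff r_def by simp
  have key: "NN (\<lambda>t \<omega>. u (r j) t \<omega> - u (r k) t \<omega>) < (1/8)^j" if "j \<le> k" for j k
  proof -
    have "r j \<le> r k" using r_mono that by (simp add: strict_mono_less_eq)
    then show ?thesis using r_ge[of j] by (intro Kf) auto
  qed
  define U where "U j p = u (r j) (fst p) (snd p)" for j p
  have Um[measurable]: "U j \<in> borel_measurable P" for j
    unfolding U_def[abs_def] by (rule HF_meas[OF u])
  define d where "d j p = U (Suc j) p - U j p" for j p
  have dm[measurable]: "d j \<in> borel_measurable P" for j unfolding d_def[abs_def] by measurable
  have d_int: "integrable P (\<lambda>p. (d j p)\<^sup>2)" for j
    using HF_sq[OF HF_diff[OF u u, of "r (Suc j)" "r j"]] by (simp add: d_def U_def)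
  have d_bd: "(\<integral>p. (d j p)\<^sup>2 \<partial>P) < (1/8)^j" for j
  proof -
    have "(\<integral>p. (d j p)\<^sup>2 \<partial>P) = NN (\<lambda>t \<omega>. u (r j) t \<omega> - u (r (Suc j)) t \<omega>)"
      unfolding NN_def d_def U_def by (simp add: power2_commute)
    also have "\<dots> < (1/8)^j" by (rule key) simp
    finally show ?thesis .
  qed
  define G where "G p = (\<Sum>j. ennreal (2^j * (d j p)\<^sup>2))" for p
  have Gm[measurable]: "G \<in> borel_measurable P" unfolding G_def[abs_def] by measurable
  have "(\<integral>\<^sup>+p. G p \<partial>P) = (\<Sum>j. \<integral>\<^sup>+p. ennreal (2^j * (d j p)\<^sup>2) \<partial>P)"
    unfolding G_def by (rule nn_integral_suminf) measurable
  also have "\<dots> \<le> (\<Sum>j. ennreal ((1/4)^j))"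
  proof (rule suminf_le)
    fix j
    have "(\<integral>\<^sup>+p. ennreal (2^j * (d j p)\<^sup>2) \<partial>P) = ennreal (\<integral>p. 2^j * (d j p)\<^sup>2 \<partial>P)"
      by (rule nn_integral_eq_integral) (auto intro: integrable_mult_right d_int)
    also have "(\<integral>p. 2^j * (d j p)\<^sup>2 \<partial>P) = 2^j * (\<integral>p. (d j p)\<^sup>2 \<partial>P)" by simp
    also have "\<dots> \<le> 2^j * (1/8)^j" using d_bd[of j] by (intro mult_left_mono) auto
    also have "(2::real)^j * (1/8)^j = (1/4)^j" by (simp add: power_mult_distrib[symmetric])
    finally show "(\<integral>\<^sup>+p. ennreal (2^j * (d j p)\<^sup>2) \<partial>P) \<le> ennreal ((1/4)^j)" by (simp add: ennreal_leI)
  qed auto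
  also have "\<dots> = ennreal (\<Sum>j. (1/4::real)^j)"
    by (rule suminf_ennreal2) (auto intro: summable_geometric)
  finally have "(\<integral>\<^sup>+p. G p \<partial>P) \<noteq> \<infinity>" by (auto simp: top_unique)
  then have AEG: "AE p in P. G p \<noteq> \<infinity>" by (intro nn_integral_PInf_AE) auto
  have conv: "AE p in P. convergent (\<lambda>n. U n p)"
    using AEG
  proof eventually_elim
    case (elim p)
    have s1: "summable (\<lambda>j. 2^j * (d j p)\<^sup>2)"
      by (rule summable_suminf_not_top) (use elim in \<open>auto simp: G_def\<close>)
    have s2: "summable (\<lambda>j. 2^j * (d j p)\<^sup>2 + (1/2::real)^j)"
      by (intro summable_add s1 summable_geometric) simp
    have s3: "summable (\<lambda>j. d j p)"
    proof (rule summable_comparison_test'[OF s2])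
      fix j :: nat
      have "\<bar>d j p\<bar> \<le> 2^j * (d j p)\<^sup>2 + 1 / 2^j" by (rule amgm_abs) simp
      then show "norm (d j p) \<le> 2^j * (d j p)\<^sup>2 + (1/2)^j" by (simp add: power_one_over)
    qed
    have "(\<lambda>n. \<Sum>j<n. d j p) \<longlonglongrightarrow> suminf (\<lambda>j. d j p)" by (rule summable_LIMSEQ[OF s3])
    moreover have "(\<Sum>j<n. d j p) = U n p - U 0 p" for n
      unfolding d_def by (rule sum_lessThan_telescope)
    ultimately have "(\<lambda>n. U n p - U 0 p) \<longlonglongrightarrow> suminf (\<lambda>j. d j p)" by simp
    then have "(\<lambda>n. (U n p - U 0 p) + U 0 p) \<longlonglongrightarrow> suminf (\<lambda>j. d j p) + U 0 p"
      by (intro tendsto_add tendsto_const)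
    then show ?case by (auto simp: convergent_def)
  qed
  define v where "v t \<omega> = lim (\<lambda>n. u (r n) t \<omega>)" for t \<omega>
  have vU: "v (fst p) (snd p) = lim (\<lambda>n. U n p)" for p by (simp add: v_def U_def)
  have vm[measurable]: "(\<lambda>p. v (fst p) (snd p)) \<in> borel_measurable P"
    unfolding vU by measurable
  have lim: "AE p in P. (\<lambda>n. U n p) \<longlonglongrightarrow> v (fst p) (snd p)"
    using conv by eventually_elim (simp add: vU convergent_LIMSEQ_iff)
  have bd: "(\<integral>\<^sup>+p. ennreal ((U n p - v (fst p) (snd p))\<^sup>2) \<partial>P) \<le> ennreal ((1/8)^n)" for n
  proof (rule fatou_nn[where f = "\<lambda>k p. (U n p - U k p)\<^sup>2"])
    show "(\<lambda>p. (U n p - U k p)\<^sup>2) \<in> borel_measurable P" for k by measurable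
    show "(\<lambda>p. (U n p - v (fst p) (snd p))\<^sup>2) \<in> borel_measurable P" by measurable
    show "0 \<le> (U n p - U k p)\<^sup>2" for k p by simp
    show "AE p in P. (\<lambda>k. (U n p - U k p)\<^sup>2) \<longlonglongrightarrow> (U n p - v (fst p) (snd p))\<^sup>2"
      using lim by eventually_elim (intro tendsto_intros)
    show "eventually (\<lambda>k. (\<integral>\<^sup>+p. ennreal ((U n p - U k p)\<^sup>2) \<partial>P) \<le> ennreal ((1/8)^n)) sequentially"
      unfolding eventually_sequentially
    proof (intro exI allI impI)
      fix k assume "n \<le> k"
      have "(\<integral>\<^sup>+p. ennreal ((U n p - U k p)\<^sup>2) \<partial>P) = ennreal (NN (\<lambda>t \<omega>. u (r n) t \<omega> - u (r k) t \<omega>))"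
        unfolding NN_def U_def
        by (rule nn_integral_eq_integral) (use HF_sq[OF HF_diff[OF u u, of "r n" "r k"]] in auto)
      also have "\<dots> \<le> ennreal ((1/8)^n)" using key[OF \<open>n \<le> k\<close>] by (intro ennreal_leI) simp
      finally show "(\<integral>\<^sup>+p. ennreal ((U n p - U k p)\<^sup>2) \<partial>P) \<le> ennreal ((1/8)^n)" .
    qed
  qed
  have dint: "integrable P (\<lambda>p. (U n p - v (fst p) (snd p))\<^sup>2)" for n
    unfolding integrable_iff_bounded
  proof
    show "(\<lambda>p. (U n p - v (fst p) (snd p))\<^sup>2) \<in> borel_measurable P" by measurable
    have "(\<integral>\<^sup>+p. ennreal (norm ((U n p - v (fst p) (snd p))\<^sup>2)) \<partial>P) = (\<integral>\<^sup>+p. ennreal ((U n p - v (fst p) (snd p))\<^sup>2) \<partial>P)"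
      by simp
    also have "\<dots> \<le> ennreal ((1/8)^n)" by (rule bd)
    also have "\<dots> < \<infinity>" by simp
    finally show "(\<integral>\<^sup>+p. ennreal (norm ((U n p - v (fst p) (snd p))\<^sup>2)) \<partial>P) < \<infinity>" .
  qed
  have NNbd: "NN (\<lambda>t \<omega>. u (r n) t \<omega> - v t \<omega>) \<le> (1/8)^n" for n
  proof -
    have "ennreal (NN (\<lambda>t \<omega>. u (r n) t \<omega> - v t \<omega>)) = (\<integral>\<^sup>+p. ennreal ((U n p - v (fst p) (snd p))\<^sup>2) \<partial>P)"
      unfolding NN_def U_def using dint[of n] unfolding U_def
      by (intro nn_integral_eq_integral[symmetric]) auto
    also have "\<dots> \<le> ennreal ((1/8)^n)" by (rule bd)
    finally show ?thesis by (simp add: ennreal_le_iff)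
  qed
  have HFv: "HF M F T v"
    unfolding HF_iff
  proof (intro conjI ballI)
    show "(\<lambda>p. v (fst p) (snd p)) \<in> borel_measurable P" by (rule vm)
    fix t :: real assume t: "t \<in> {0..T}"
    have [measurable]: "u (r n) t \<in> borel_measurable (F t)" for n using u[of "r n"] t unfolding HF_iff by blast
    show "v t \<in> borel_measurable (F t)" unfolding v_def[abs_def] by measurable
  next
    show "integrable P (\<lambda>p. (v (fst p) (snd p))\<^sup>2)"
    proof (rule Bochner_Integration.integrable_bound)
      show "integrable P (\<lambda>p. 2 * (U 0 p)\<^sup>2 + 2 * (U 0 p - v (fst p) (snd p))\<^sup>2)"
        using HF_sq[OF u[of "r 0"]] dint[of 0] unfolding U_def
        by (intro Bochner_Integration.integrable_add integrable_mult_right) auto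
      show "(\<lambda>p. (v (fst p) (snd p))\<^sup>2) \<in> borel_measurable P" by measurable
      show "AE p in P. norm ((v (fst p) (snd p))\<^sup>2) \<le> norm (2 * (U 0 p)\<^sup>2 + 2 * (U 0 p - v (fst p) (snd p))\<^sup>2)"
      proof (intro AE_I2)
        fix p
        have "(v (fst p) (snd p))\<^sup>2 = (U 0 p + (- (U 0 p - v (fst p) (snd p))))\<^sup>2" by simp
        also have "\<dots> \<le> 2 * (U 0 p)\<^sup>2 + 2 * (- (U 0 p - v (fst p) (snd p)))\<^sup>2" by (rule sq_sum_le)
        finally show "norm ((v (fst p) (snd p))\<^sup>2) \<le> norm (2 * (U 0 p)\<^sup>2 + 2 * (U 0 p - v (fst p) (snd p))\<^sup>2)"
          by (simp add: power2_commute)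
      qed
    qed
  qed
  have tend: "(\<lambda>n. NN (\<lambda>t \<omega>. u (r n) t \<omega> - v t \<omega>)) \<longlonglongrightarrow> 0"
  proof (rule real_tendsto_sandwich[where f = "\<lambda>n. 0" and h = "\<lambda>n. (1/8)^n"])
    show "eventually (\<lambda>n. 0 \<le> NN (\<lambda>t \<omega>. u (r n) t \<omega> - v t \<omega>)) sequentially" by (simp add: NN_nonneg)
    show "eventually (\<lambda>n. NN (\<lambda>t \<omega>. u (r n) t \<omega> - v t \<omega>) \<le> (1/8)^n) sequentially" by (simp add: NNbd)
    show "(\<lambda>n. 0::real) \<longlonglongrightarrow> 0" by simp
    show "(\<lambda>n. (1/8::real)^n) \<longlonglongrightarrow> 0" by (rule LIMSEQ_power_zero) simp
  qed
  show ?thesis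
    using HFv r_mono tend lim unfolding U_def by blast
qed

end



lemma sq_tendsto_zero:
  fixes x :: "nat \<Rightarrow> real"
  assumes "(\<lambda>n. (x n)\<^sup>2) \<longlonglongrightarrow> 0" shows "x \<longlonglongrightarrow> 0"
proof -
  have "(\<lambda>n. sqrt ((x n)\<^sup>2)) \<longlonglongrightarrow> sqrt 0" by (intro tendsto_real_sqrt assms)
  then have "(\<lambda>n. \<bar>x n\<bar>) \<longlonglongrightarrow> 0" by simp
  then show ?thesis by (rule tendsto_rabs_zero_cancel)
qed

lemma sandwich0:
  fixes x y :: "nat \<Rightarrow> real"
  assumes "\<And>n. 0 \<le> x n" "\<And>n. x n \<le> y n" "y \<longlonglongrightarrow> 0" shows "x \<longlonglongrightarrow> 0"
  by (rule real_tendsto_sandwich[where f = "\<lambda>n. 0" and h = y]) (use assms in auto)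

context ctrl begin

lemma I_int: assumes v: "HF M F T v" shows "integrable M (I v)"
proof (rule Bochner_Integration.integrable_bound)
  have "integrable P (\<lambda>p. \<bar>v (fst p) (snd p)\<bar>)" by (rule integrable_abs[OF HF_int[OF v]])
  from fubini_P(1)[of "\<lambda>t \<omega>. \<bar>v t \<omega>\<bar>", OF this]
  show "integrable M (\<lambda>\<omega>. \<integral>t. \<bar>v t \<omega>\<bar> \<partial>D)" .
  show "I v \<in> borel_measurable M" by (rule I_meas[OF v])
  show "AE \<omega> in M. norm (I v \<omega>) \<le> norm (\<integral>t. \<bar>v t \<omega>\<bar> \<partial>D)"
  proof (intro AE_I2)
    fix \<omega>
    have "\<bar>I v \<omega>\<bar> \<le> (\<integral>t. \<bar>v t \<omega>\<bar> \<partial>D)" by (rule I_abs[OF v])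
    moreover have "(\<integral>t. \<bar>v t \<omega>\<bar> \<partial>D) \<le> \<bar>\<integral>t. \<bar>v t \<omega>\<bar> \<partial>D\<bar>" by (rule abs_ge_self)
    ultimately show "norm (I v \<omega>) \<le> norm (\<integral>t. \<bar>v t \<omega>\<bar> \<partial>D)" by simp
  qed
qed

lemma l_isCont: "isCont l x"
  using l_cont continuous_on_eq_continuous_at[of UNIV l] by simp

lemma Psi_isCont: "isCont \<Psi> x"
  using Psi_cont continuous_on_eq_continuous_at[of UNIV \<Psi>] by simp

lemma lsc:
  fixes w :: "nat \<Rightarrow> real \<Rightarrow> 'a \<Rightarrow> real"
  assumes w: "\<And>n. HF M F T (w n)" and v: "HF M F T v"
    and nn: "(\<lambda>n. NN (\<lambda>t \<omega>. w n t \<omega> - v t \<omega>)) \<longlonglongrightarrow> 0"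
    and ae: "AE p in P. (\<lambda>n. w n (fst p) (snd p)) \<longlonglongrightarrow> v (fst p) (snd p)"
    and Jb: "\<And>n. J (w n) \<le> m + e n" and e: "e \<longlonglongrightarrow> 0"
  shows "J v \<le> m"
proof -
  have d: "HF M F T (\<lambda>t \<omega>. w n t \<omega> - v t \<omega>)" for n by (rule HF_diff[OF w v])
  define Cp where "Cp n = (\<integral>p. \<pi> (fst p) (snd p) * w n (fst p) (snd p) \<partial>P)" for n
  define Cv where "Cv = (\<integral>p. \<pi> (fst p) (snd p) * v (fst p) (snd p) \<partial>P)"
  have Cp_lim: "Cp \<longlonglongrightarrow> Cv"
  proof -
    have eq: "Cp n - Cv = (\<integral>p. \<pi> (fst p) (snd p) * (w n (fst p) (snd p) - v (fst p) (snd p)) \<partial>P)" for n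
      unfolding Cp_def Cv_def
      by (subst Bochner_Integration.integral_diff[OF pi_int[OF w] pi_int[OF v], symmetric]) (simp add: algebra_simps)
    have cs: "(Cp n - Cv)\<^sup>2 \<le> NN \<pi> * NN (\<lambda>t \<omega>. w n t \<omega> - v t \<omega>)" for n
      unfolding eq NN_def
      using CS_integral(2)[OF HF_meas[OF price] HF_meas[OF d] HF_sq[OF price] HF_sq[OF d]] by simp
    have "(\<lambda>n. (Cp n - Cv)\<^sup>2) \<longlonglongrightarrow> 0"
    proof (rule sandwich0)
      show "0 \<le> (Cp n - Cv)\<^sup>2" for n by simp
      show "(Cp n - Cv)\<^sup>2 \<le> NN \<pi> * NN (\<lambda>t \<omega>. w n t \<omega> - v t \<omega>)" for n by (rule cs)
      show "(\<lambda>n. NN \<pi> * NN (\<lambda>t \<omega>. w n t \<omega> - v t \<omega>)) \<longlonglongrightarrow> 0"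
        using tendsto_mult[OF tendsto_const nn, of "NN \<pi>"] by simp
    qed
    then have "(\<lambda>n. Cp n - Cv) \<longlonglongrightarrow> 0" by (rule sq_tendsto_zero)
    then have "(\<lambda>n. (Cp n - Cv) + Cv) \<longlonglongrightarrow> 0 + Cv" by (intro tendsto_add tendsto_const)
    then show ?thesis by simp
  qed
  define X where "X n \<omega> = I (w n) \<omega> - I v \<omega>" for n \<omega>
  have Xint: "integrable M (X n)" for n
    unfolding X_def[abs_def] by (intro Bochner_Integration.integrable_diff I_int w v)
  have Xbd: "(\<integral>\<omega>. norm (X n \<omega>) \<partial>M) \<le> (\<integral>p. \<bar>w n (fst p) (snd p) - v (fst p) (snd p)\<bar> \<partial>P)" for n
  proof -
    have "(\<integral>\<omega>. norm (X n \<omega>) \<partial>M) \<le> (\<integral>\<omega>. (\<integral>t. \<bar>w n t \<omega> - v t \<omega>\<bar> \<partial>D) \<partial>M)"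
    proof (rule integral_mono_AE)
      show "integrable M (\<lambda>\<omega>. norm (X n \<omega>))" by (intro integrable_norm Xint)
      show "integrable M (\<lambda>\<omega>. \<integral>t. \<bar>w n t \<omega> - v t \<omega>\<bar> \<partial>D)"
        using fubini_P(1)[of "\<lambda>t \<omega>. \<bar>w n t \<omega> - v t \<omega>\<bar>"] integrable_abs[OF HF_int[OF d]] by simp
      show "AE \<omega> in M. norm (X n \<omega>) \<le> (\<integral>t. \<bar>w n t \<omega> - v t \<omega>\<bar> \<partial>D)"
        using I_lin[OF w[of n] v, of 1 "-1"]
      proof eventually_elim
        case (elim \<omega>)
        then have "X n \<omega> = I (\<lambda>t \<omega>. w n t \<omega> - v t \<omega>) \<omega>" by (simp add: X_def)
        then show ?case using I_abs[OF d, of n \<omega>] by simp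
      qed
    qed
    also have "\<dots> = (\<integral>p. \<bar>w n (fst p) (snd p) - v (fst p) (snd p)\<bar> \<partial>P)"
      using fubini_P(2)[of "\<lambda>t \<omega>. \<bar>w n t \<omega> - v t \<omega>\<bar>"] integrable_abs[OF HF_int[OF d]] by simp
    finally show ?thesis .
  qed
  have Pbd: "(\<integral>p. \<bar>w n (fst p) (snd p) - v (fst p) (snd p)\<bar> \<partial>P)\<^sup>2 \<le> T * NN (\<lambda>t \<omega>. w n t \<omega> - v t \<omega>)" for n
  proof -
    interpret PF: finite_measure P by (rule P_fin)
    have m1: "(\<lambda>p. \<bar>w n (fst p) (snd p) - v (fst p) (snd p)\<bar>) \<in> borel_measurable P"
      using borel_measurable_abs[OF HF_meas[OF d]] by simp
    have "(\<integral>p. 1 * \<bar>w n (fst p) (snd p) - v (fst p) (snd p)\<bar> \<partial>P)\<^sup>2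
       \<le> (\<integral>p. 1\<^sup>2 \<partial>P) * (\<integral>p. \<bar>w n (fst p) (snd p) - v (fst p) (snd p)\<bar>\<^sup>2 \<partial>P)"
      by (rule CS_integral(2)[OF borel_measurable_const m1 PF.integrable_const]) (use HF_sq[OF d] in simp)
    then show ?thesis by (simp add: NN_def measure_P)
  qed
  have L1: "(\<lambda>n. \<integral>\<omega>. norm (X n \<omega>) \<partial>M) \<longlonglongrightarrow> 0"
  proof (rule sq_tendsto_zero, rule sandwich0)
    fix n
    show "0 \<le> (\<integral>\<omega>. norm (X n \<omega>) \<partial>M)\<^sup>2" by simp
    have "0 \<le> (\<integral>\<omega>. norm (X n \<omega>) \<partial>M)" by simp
    then have "(\<integral>\<omega>. norm (X n \<omega>) \<partial>M)\<^sup>2 \<le> (\<integral>p. \<bar>w n (fst p) (snd p) - v (fst p) (snd p)\<bar> \<partial>P)\<^sup>2"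
      using Xbd[of n] by (intro power_mono) auto
    also have "\<dots> \<le> T * NN (\<lambda>t \<omega>. w n t \<omega> - v t \<omega>)" by (rule Pbd)
    finally show "(\<integral>\<omega>. norm (X n \<omega>) \<partial>M)\<^sup>2 \<le> T * NN (\<lambda>t \<omega>. w n t \<omega> - v t \<omega>)" .
  next
    show "(\<lambda>n. T * NN (\<lambda>t \<omega>. w n t \<omega> - v t \<omega>)) \<longlonglongrightarrow> 0"
      using tendsto_mult[OF tendsto_const nn, of T] by simp
  qed
  obtain r1 where r1: "strict_mono r1" and r1ae: "AE \<omega> in M. (\<lambda>n. X (r1 n) \<omega>) \<longlonglongrightarrow> 0"
    using tendsto_L1_AE_subseq[OF Xint L1] by blast
  define A where "A n = (\<integral>p. l (w n (fst p) (snd p)) \<partial>P)" for n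
  define B where "B n = (\<integral>\<omega>. \<Psi> (x0 + I (w n) \<omega>) \<partial>M)" for n
  have A0: "0 \<le> A n" for n unfolding A_def by (rule Bochner_Integration.integral_nonneg_AE) (simp add: l_nonneg)
  have B0: "0 \<le> B n" for n unfolding B_def by (rule Bochner_Integration.integral_nonneg_AE) (simp add: Psi_nonneg)
  have JABC: "J (w n) = A n + Cp n + B n" for n by (simp add: J_def A_def B_def Cp_def)
  have Jv: "J v = (\<integral>p. l (v (fst p) (snd p)) \<partial>P) + Cv + (\<integral>\<omega>. \<Psi> (x0 + I v \<omega>) \<partial>M)"
    by (simp add: J_def Cv_def)
  have cconv: "(\<lambda>n. m + e n - Cp n) \<longlonglongrightarrow> m + 0 - Cv" by (intro tendsto_intros e Cp_lim)
  then have "Bseq (\<lambda>n. m + e n - Cp n)" by (rule convergent_imp_Bseq[OF convergentI])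
  then obtain Bd where Bd0: "0 < Bd" and Bd: "\<forall>n. norm (m + e n - Cp n) \<le> Bd" by (rule BseqE)
  have Abd: "\<bar>A (r1 n)\<bar> \<le> Bd" for n
  proof -
    have "A (r1 n) \<le> m + e (r1 n) - Cp (r1 n)" using Jb[of "r1 n"] B0[of "r1 n"] JABC[of "r1 n"] by linarith
    also have "\<dots> \<le> Bd" using Bd[rule_format, of "r1 n"] by simp
    finally show ?thesis using A0[of "r1 n"] by simp
  qed
  obtain r2 \<alpha> where r2: "strict_mono r2" and Alim: "(\<lambda>n. A (r1 (r2 n))) \<longlonglongrightarrow> \<alpha>"
    using bounded_subseq_conv[of "\<lambda>n. A (r1 n)", OF Abd] by blast
  define q where "q n = r1 (r2 n)" for n
  have q: "strict_mono q" unfolding q_def strict_mono_def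
  proof (intro allI impI)
    fix x y :: nat assume "x < y"
    then have "r2 x < r2 y" by (rule strict_monoD[OF r2])
    then show "r1 (r2 x) < r1 (r2 y)" by (rule strict_monoD[OF r1])
  qed
  have Alim': "(\<lambda>n. A (q n)) \<longlonglongrightarrow> \<alpha>" using Alim by (simp add: q_def)
  have Afat: "(\<integral>p. l (v (fst p) (snd p)) \<partial>P) \<le> \<alpha>"
  proof (rule fatou_real[where f = "\<lambda>n p. l (w (q n) (fst p) (snd p))" and c = "\<lambda>n. A (q n)"])
    show "integrable P (\<lambda>p. l (w (q n) (fst p) (snd p)))" for n by (rule l_int[OF w])
    show "integrable P (\<lambda>p. l (v (fst p) (snd p)))" by (rule l_int[OF v])
    show "0 \<le> l (w (q n) (fst p) (snd p))" for n p by (rule l_nonneg)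
    show "AE p in P. (\<lambda>n. l (w (q n) (fst p) (snd p))) \<longlonglongrightarrow> l (v (fst p) (snd p))"
      using ae
    proof eventually_elim
      case (elim p)
      have "(\<lambda>n. w (q n) (fst p) (snd p)) \<longlonglongrightarrow> v (fst p) (snd p)"
        using LIMSEQ_subseq_LIMSEQ[OF elim q] by (simp add: comp_def)
      then show ?case by (rule isCont_tendsto_compose[OF l_isCont])
    qed
    show "(\<integral>p. l (w (q n) (fst p) (snd p)) \<partial>P) \<le> A (q n)" for n by (simp add: A_def)
    show "(\<lambda>n. A (q n)) \<longlonglongrightarrow> \<alpha>" by (rule Alim')
  qed
  have Bfat: "(\<integral>\<omega>. \<Psi> (x0 + I v \<omega>) \<partial>M) \<le> m + 0 - Cv - \<alpha>"
  proof (rule fatou_real[where f = "\<lambda>n \<omega>. \<Psi> (x0 + I (w (q n)) \<omega>)" and c = "\<lambda>n. m + e (q n) - Cp (q n) - A (q n)"])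
    show "integrable M (\<lambda>\<omega>. \<Psi> (x0 + I (w (q n)) \<omega>))" for n by (rule Psi_int[OF w])
    show "integrable M (\<lambda>\<omega>. \<Psi> (x0 + I v \<omega>))" by (rule Psi_int[OF v])
    show "0 \<le> \<Psi> (x0 + I (w (q n)) \<omega>)" for n \<omega> by (rule Psi_nonneg)
    show "AE \<omega> in M. (\<lambda>n. \<Psi> (x0 + I (w (q n)) \<omega>)) \<longlonglongrightarrow> \<Psi> (x0 + I v \<omega>)"
      using r1ae
    proof eventually_elim
      case (elim \<omega>)
      have "(\<lambda>n. X (r1 (r2 n)) \<omega>) \<longlonglongrightarrow> 0"
        using LIMSEQ_subseq_LIMSEQ[OF elim r2] by (simp add: comp_def)
      then have "(\<lambda>n. x0 + I v \<omega> + X (q n) \<omega>) \<longlonglongrightarrow> x0 + I v \<omega> + 0"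
        unfolding q_def by (intro tendsto_add tendsto_const)
      then have "(\<lambda>n. x0 + I (w (q n)) \<omega>) \<longlonglongrightarrow> x0 + I v \<omega>" by (simp add: X_def)
      then show ?case by (rule isCont_tendsto_compose[OF Psi_isCont])
    qed
    show "(\<integral>\<omega>. \<Psi> (x0 + I (w (q n)) \<omega>) \<partial>M) \<le> m + e (q n) - Cp (q n) - A (q n)" for n
      using Jb[of "q n"] JABC[of "q n"] unfolding B_def by linarith
    have "(\<lambda>n. e (q n)) \<longlonglongrightarrow> 0" using LIMSEQ_subseq_LIMSEQ[OF e q] by (simp add: comp_def)
    moreover have "(\<lambda>n. Cp (q n)) \<longlonglongrightarrow> Cv" using LIMSEQ_subseq_LIMSEQ[OF Cp_lim q] by (simp add: comp_def)
    ultimately show "(\<lambda>n. m + e (q n) - Cp (q n) - A (q n)) \<longlonglongrightarrow> m + 0 - Cv - \<alpha>"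
      by (intro tendsto_intros Alim')
  qed
  show ?thesis using Afat Bfat Jv by linarith
qed

end


context ctrl begin

lemma l_mid: "l (1/2 * x + 1/2 * y) + 0 * (x - y)\<^sup>2 \<le> (l x + l y) / 2"
proof -
  have "l ((1 - 1/2) *\<^sub>R x + (1/2) *\<^sub>R y) \<le> (1 - 1/2) * l x + (1/2) * l y"
    by (rule convex_onD[OF l_convex]) auto
  then show ?thesis by simp
qed

lemma exists_min: "\<exists>vs. HF M F T vs \<and> (\<forall>v. HF M F T v \<longrightarrow> J vs \<le> J v)"
proof -
  define H where "H = {v. HF M F T v}"
  define K0 where "K0 = c * T + NN \<pi> / (2 * a)"
  have lowJ: "- K0 \<le> J v" if "v \<in> H" for v
  proof -
    have "a / 2 * NN v - K0 \<le> J v" using J_lower that by (simp add: H_def K0_def)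
    moreover have "0 \<le> a / 2 * NN v" using apos NN_nonneg by simp
    ultimately show ?thesis by linarith
  qed
  have Hne: "H \<noteq> {}" using HF_zero by (auto simp: H_def)
  have bddJ: "bdd_below (J ` H)" by (rule bdd_belowI2[where m = "- K0"]) (rule lowJ)
  define m where "m = Inf (J ` H)"
  have m_le: "m \<le> J v" if "v \<in> H" for v unfolding m_def using that bddJ by (intro cInf_lower) auto
  have near: "\<exists>v\<in>H. J v < m + \<delta>" if "0 < \<delta>" for \<delta>
  proof -
    have "Inf (J ` H) < m + \<delta>" using that by (simp add: m_def)
    then obtain y where "y \<in> J ` H" "y < m + \<delta>" using cInf_lessD[of "J ` H"] Hne by blast
    then show ?thesis by blast
  qed
  define \<delta> where "\<delta> n = inverse (real (Suc n))" for n
  have \<delta>pos: "0 < \<delta> n" for n by (simp add: \<delta>_def)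
  have \<delta>le1: "\<delta> n \<le> 1" for n by (simp add: \<delta>_def inverse_le_1_iff)
  have \<delta>anti: "\<delta> k \<le> \<delta> n" if "n \<le> k" for n k using that by (simp add: \<delta>_def)
  have \<delta>lim: "\<delta> \<longlonglongrightarrow> 0" unfolding \<delta>_def[abs_def] by (rule LIMSEQ_inverse_real_of_nat)
  define S where "S n = {v\<in>H. J v \<le> m + \<delta> n}" for n
  have Sne: "S n \<noteq> {}" for n
  proof -
    obtain v where "v \<in> H" "J v < m + \<delta> n" using near[OF \<delta>pos] by blast
    then show ?thesis by (auto simp: S_def)
  qed
  define Bd where "Bd = 2 * (m + 1 + K0) / a"
  have NNbd: "NN v \<le> Bd" if "v \<in> S n" for v n
  proof -
    have "a / 2 * NN v - K0 \<le> J v" using J_lower that by (simp add: S_def H_def K0_def)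
    also have "\<dots> \<le> m + 1" using that \<delta>le1[of n] by (simp add: S_def)
    finally have "a / 2 * NN v \<le> m + 1 + K0" by simp
    then have "a * NN v \<le> 2 * (m + 1 + K0)" by simp
    then show ?thesis using apos by (simp add: Bd_def field_simps)
  qed
  have bddS: "bdd_below (NN ` S n)" for n by (rule bdd_belowI2[where m = 0]) (rule NN_nonneg)
  define \<rho> where "\<rho> n = Inf (NN ` S n)" for n
  have \<rho>_le: "\<rho> n \<le> NN v" if "v \<in> S n" for v n unfolding \<rho>_def using that bddS by (intro cInf_lower) auto
  have Smono: "S k \<subseteq> S n" if "n \<le> k" for n k using \<delta>anti[OF that] by (auto simp: S_def)
  have \<rho>mono: "incseq \<rho>"
  proof (rule incseq_SucI)
    fix n
    show "\<rho> n \<le> \<rho> (Suc n)" unfolding \<rho>_def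
      by (rule cInf_superset_mono) (use Sne bddS Smono[of n "Suc n"] in auto)
  qed
  have \<rho>bd: "\<forall>n. \<rho> n \<le> Bd"
  proof
    fix n
    obtain v where "v \<in> S n" using Sne by blast
    then show "\<rho> n \<le> Bd" using \<rho>_le[OF \<open>v \<in> S n\<close>] NNbd[OF \<open>v \<in> S n\<close>] by linarith
  qed
  obtain L where L: "\<rho> \<longlonglongrightarrow> L" and \<rho>L: "\<forall>i. \<rho> i \<le> L" using incseq_convergent[OF \<rho>mono \<rho>bd] by blast
  have "\<forall>n. \<exists>v. v \<in> S n \<and> NN v < \<rho> n + \<delta> n"
  proof
    fix n
    have lt: "Inf (NN ` S n) < \<rho> n + \<delta> n" using \<delta>pos[of n] unfolding \<rho>_def by linarith
    have ne: "NN ` S n \<noteq> {}" using Sne[of n] by simp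
    have "\<exists>y\<in>NN ` S n. y < \<rho> n + \<delta> n" by (rule cInf_lessD[OF ne lt])
    then show "\<exists>v. v \<in> S n \<and> NN v < \<rho> n + \<delta> n" by blast
  qed
  from choice[OF this] obtain u where uu: "\<forall>n. u n \<in> S n \<and> NN (u n) < \<rho> n + \<delta> n" by blast
  have uS: "u n \<in> S n" for n using uu by blast
  have uN: "NN (u n) < \<rho> n + \<delta> n" for n using uu by blast
  have uH: "HF M F T (u n)" for n using uS[of n] by (simp add: S_def H_def)
  have uJ: "J (u n) \<le> m + \<delta> n" for n using uS[of n] by (simp add: S_def)
  have diff_le: "NN (\<lambda>t \<omega>. u n t \<omega> - u k t \<omega>) \<le> 2 * (\<rho> k - \<rho> n) + 2 * \<delta> n + 2 * \<delta> k"
    if nk: "n \<le> k" for n k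
  proof -
    define mid where "mid = (\<lambda>t \<omega>. 1/2 * u n t \<omega> + 1/2 * u k t \<omega>)"
    have midH: "HF M F T mid" unfolding mid_def by (rule HF_mid[OF uH uH])
    have "J mid + 0 * NN (\<lambda>t \<omega>. u n t \<omega> - u k t \<omega>) \<le> (J (u n) + J (u k)) / 2"
      unfolding mid_def by (rule J_mid[OF uH uH order.refl l_mid])
    then have "J mid \<le> (J (u n) + J (u k)) / 2" by simp
    also have "\<dots> \<le> m + \<delta> n" using uJ[of n] uJ[of k] \<delta>anti[OF nk] by simp
    finally have "mid \<in> S n" using midH by (simp add: S_def H_def)
    then have "\<rho> n \<le> NN mid" by (rule \<rho>_le)
    moreover have "NN (\<lambda>t \<omega>. u n t \<omega> - u k t \<omega>) = 2 * NN (u n) + 2 * NN (u k) - 4 * NN mid"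
      unfolding mid_def by (rule parallelogram[OF uH uH])
    moreover have "\<rho> k \<le> \<rho> k" by simp
    ultimately show ?thesis using uN[of n] uN[of k] by argo
  qed
  have NN_sym: "NN (\<lambda>t \<omega>. u n t \<omega> - u k t \<omega>) = NN (\<lambda>t \<omega>. u k t \<omega> - u n t \<omega>)" for n k
    unfolding NN_def by (simp add: power2_commute)
  have cau: "\<exists>N. \<forall>n\<ge>N. \<forall>k\<ge>N. NN (\<lambda>t \<omega>. u n t \<omega> - u k t \<omega>) < e" if e: "0 < e" for e
  proof -
    have e8: "0 < e / 8" using e by simp
    obtain N1 where N1: "\<forall>n\<ge>N1. norm (\<rho> n - L) < e / 8"
      using LIMSEQ_D[OF L e8] by blast
    obtain N2 where N2: "inverse (real (Suc N2)) < e / 8"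
      using reals_Archimedean[of "e / 8"] e by auto
    define N where "N = max N1 N2"
    have main: "NN (\<lambda>t \<omega>. u n t \<omega> - u k t \<omega>) < e" if "N \<le> n" "n \<le> k" for n k
    proof -
      have "\<rho> k \<le> L" using \<rho>L by simp
      moreover have "L - \<rho> n < e / 8"
      proof -
        have "norm (\<rho> n - L) < e / 8" using N1 that by (simp add: N_def)
        moreover have "L - \<rho> n \<le> norm (\<rho> n - L)" by simp
        ultimately show ?thesis by linarith
      qed
      moreover have dN2: "\<delta> N2 < e / 8" using N2 by (simp add: \<delta>_def)
      moreover have "\<delta> n \<le> \<delta> N2" by (rule \<delta>anti) (use that in \<open>simp add: N_def\<close>)
      moreover have "\<delta> k \<le> \<delta> N2" by (rule \<delta>anti) (use that in \<open>simp add: N_def\<close>)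
      ultimately show ?thesis using diff_le[OF \<open>n \<le> k\<close>] e by argo
    qed
    show ?thesis
    proof (intro exI allI impI)
      fix n k assume "N \<le> n" "N \<le> k"
      show "NN (\<lambda>t \<omega>. u n t \<omega> - u k t \<omega>) < e"
      proof (cases "n \<le> k")
        case True then show ?thesis using main \<open>N \<le> n\<close> by blast
      next
        case False then show ?thesis using main[of k n] \<open>N \<le> k\<close> NN_sym[of n k] by simp
      qed
    qed
  qed
  obtain vs r where vs: "HF M F T vs" and r: "strict_mono r"
    and nn: "(\<lambda>n. NN (\<lambda>t \<omega>. u (r n) t \<omega> - vs t \<omega>)) \<longlonglongrightarrow> 0"
    and ae: "AE p in P. (\<lambda>n. u (r n) (fst p) (snd p)) \<longlonglongrightarrow> vs (fst p) (snd p)"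
    using complete[OF uH cau] by blast
  have "J vs \<le> m"
  proof (rule lsc[where w = "\<lambda>n. u (r n)" and e = "\<lambda>n. \<delta> (r n)"])
    show "HF M F T (u (r n))" for n by (rule uH)
    show "HF M F T vs" by (rule vs)
    show "(\<lambda>n. NN (\<lambda>t \<omega>. u (r n) t \<omega> - vs t \<omega>)) \<longlonglongrightarrow> 0" by (rule nn)
    show "AE p in P. (\<lambda>n. u (r n) (fst p) (snd p)) \<longlonglongrightarrow> vs (fst p) (snd p)" by (rule ae)
    show "J (u (r n)) \<le> m + \<delta> (r n)" for n by (rule uJ)
    show "(\<lambda>n. \<delta> (r n)) \<longlonglongrightarrow> 0" using LIMSEQ_subseq_LIMSEQ[OF \<delta>lim r] by (simp add: comp_def)
  qed
  show ?thesis
  proof (intro exI conjI allI impI)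
    show "HF M F T vs" by (rule vs)
    fix v assume "HF M F T v"
    then have "m \<le> J v" by (intro m_le) (simp add: H_def)
    then show "J vs \<le> J v" using \<open>J vs \<le> m\<close> by linarith
  qed
qed

lemma unique:
  assumes th: "0 < \<theta>"
    and strong: "\<And>x y. l (1/2 * x + 1/2 * y) + \<theta> / 8 * (x - y)\<^sup>2 \<le> (l x + l y) / 2"
    and vs: "HF M F T vs" and vsmin: "\<forall>v. HF M F T v \<longrightarrow> J vs \<le> J v"
    and w: "HF M F T w" and wmin: "\<forall>v. HF M F T v \<longrightarrow> J w \<le> J v"
  shows "AE p in P. w (fst p) (snd p) = vs (fst p) (snd p)"
proof -
  have k: "0 \<le> \<theta> / 8" using th by simp
  have mid: "J (\<lambda>t \<omega>. 1/2 * w t \<omega> + 1/2 * vs t \<omega>) + \<theta> / 8 * NN (\<lambda>t \<omega>. w t \<omega> - vs t \<omega>) \<le> (J w + J vs) / 2"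
    by (rule J_mid[OF w vs k strong])
  have "J vs \<le> J (\<lambda>t \<omega>. 1/2 * w t \<omega> + 1/2 * vs t \<omega>)" using vsmin HF_mid[OF w vs] by blast
  moreover have "J w \<le> J vs" using wmin vs by blast
  moreover have "J vs \<le> J w" using vsmin w by blast
  ultimately have "(J w + J vs) / 2 = J vs" "J vs \<le> J (\<lambda>t \<omega>. 1/2 * w t \<omega> + 1/2 * vs t \<omega>)" by simp_all
  then have "\<theta> / 8 * NN (\<lambda>t \<omega>. w t \<omega> - vs t \<omega>) \<le> 0" using mid by linarith
  then have "NN (\<lambda>t \<omega>. w t \<omega> - vs t \<omega>) \<le> 0" using th by (simp add: mult_le_0_iff)
  then have z: "NN (\<lambda>t \<omega>. w t \<omega> - vs t \<omega>) = 0" using NN_nonneg by (simp add: order.antisym)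
  have "AE p in P. (w (fst p) (snd p) - vs (fst p) (snd p))\<^sup>2 = 0"
    using z unfolding NN_def
    by (subst integral_nonneg_eq_0_iff_AE[symmetric]) (use HF_sq[OF HF_diff[OF w vs]] in auto)
  then show ?thesis by eventually_elim simp
qed

end



context ctrl begin

lemma set_int_D: "set_lebesgue_integral lborel {0..T} g = (\<integral>t. g t \<partial>D)" for g :: "real \<Rightarrow> real"
  unfolding set_lebesgue_integral_def by (subst Bochner_Integration.integral_restrict_space) auto

lemma cost_J:
  assumes L: "\<And>x y. L x y = l y" and v: "HF M F T v"
  shows "cost M T L \<Psi> \<pi> x0 v = J v"
proof -
  have st: "state x0 v T \<omega> = x0 + I v \<omega>" for \<omega> by (simp add: state_def I_def)
  have "cost M T L \<Psi> \<pi> x0 v = (\<integral>\<omega>. (\<integral>t. l (v t \<omega>) + \<pi> t \<omega> * v t \<omega> \<partial>D) + \<Psi> (x0 + I v \<omega>) \<partial>M)"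
    unfolding cost_def st set_int_D L ..
  also have "\<dots> = (\<integral>\<omega>. (\<integral>t. l (v t \<omega>) + \<pi> t \<omega> * v t \<omega> \<partial>D) \<partial>M) + (\<integral>\<omega>. \<Psi> (x0 + I v \<omega>) \<partial>M)"
  proof (rule Bochner_Integration.integral_add)
    have "integrable P (\<lambda>p. l (v (fst p) (snd p)) + \<pi> (fst p) (snd p) * v (fst p) (snd p))"
      by (rule Bochner_Integration.integrable_add[OF l_int[OF v] pi_int[OF v]])
    from fubini_P(1)[of "\<lambda>t \<omega>. l (v t \<omega>) + \<pi> t \<omega> * v t \<omega>", OF this]
    show "integrable M (\<lambda>\<omega>. \<integral>t. l (v t \<omega>) + \<pi> t \<omega> * v t \<omega> \<partial>D)" .
    show "integrable M (\<lambda>\<omega>. \<Psi> (x0 + I v \<omega>))" by (rule Psi_int[OF v])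
  qed
  also have "(\<integral>\<omega>. (\<integral>t. l (v t \<omega>) + \<pi> t \<omega> * v t \<omega> \<partial>D) \<partial>M)
      = (\<integral>p. l (v (fst p) (snd p)) + \<pi> (fst p) (snd p) * v (fst p) (snd p) \<partial>P)"
  proof -
    have "integrable P (\<lambda>p. l (v (fst p) (snd p)) + \<pi> (fst p) (snd p) * v (fst p) (snd p))"
      by (rule Bochner_Integration.integrable_add[OF l_int[OF v] pi_int[OF v]])
    from fubini_P(2)[of "\<lambda>t \<omega>. l (v t \<omega>) + \<pi> t \<omega> * v t \<omega>", OF this]
    show ?thesis .
  qed
  also have "\<dots> = (\<integral>p. l (v (fst p) (snd p)) \<partial>P) + (\<integral>p. \<pi> (fst p) (snd p) * v (fst p) (snd p) \<partial>P)"
    by (rule Bochner_Integration.integral_add[OF l_int[OF v] pi_int[OF v]])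
  finally show ?thesis unfolding J_def .
qed

end

lemma convex_slice_fst:
  fixes L :: "real \<Rightarrow> real \<Rightarrow> real"
  assumes "convex_on UNIV (\<lambda>p. L (fst p) (snd p))"
  shows "convex_on UNIV (\<lambda>x. L x v)"
proof (rule convex_onI)
  fix t x y :: real assume t: "0 < t" "t < 1"
  have "L (fst ((1 - t) *\<^sub>R (x, v) + t *\<^sub>R (y, v))) (snd ((1 - t) *\<^sub>R (x, v) + t *\<^sub>R (y, v)))
     \<le> (1 - t) * L (fst (x, v)) (snd (x, v)) + t * L (fst (y, v)) (snd (y, v))"
    using convex_onD[OF assms, of t "(x, v)" "(y, v)"] t by simp
  moreover have "(1 - t) * v + t * v = v" by (simp add: algebra_simps)
  ultimately show "L ((1 - t) *\<^sub>R x + t *\<^sub>R y) v \<le> (1 - t) * L x v + t * L y v" by simp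
qed simp

lemma convex_slice_snd:
  fixes L :: "real \<Rightarrow> real \<Rightarrow> real"
  assumes "convex_on UNIV (\<lambda>p. L (fst p) (snd p))"
  shows "convex_on UNIV (\<lambda>v. L x v)"
proof (rule convex_onI)
  fix t v w :: real assume t: "0 < t" "t < 1"
  have "L (fst ((1 - t) *\<^sub>R (x, v) + t *\<^sub>R (x, w))) (snd ((1 - t) *\<^sub>R (x, v) + t *\<^sub>R (x, w)))
     \<le> (1 - t) * L (fst (x, v)) (snd (x, v)) + t * L (fst (x, w)) (snd (x, w))"
    using convex_onD[OF assms, of t "(x, v)" "(x, w)"] t by simp
  moreover have "(1 - t) * x + t * x = x" by (simp add: algebra_simps)
  ultimately show "L x ((1 - t) *\<^sub>R v + t *\<^sub>R w) \<le> (1 - t) * L x v + t * L x w" by simp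
qed simp

lemma strong_from_convex:
  fixes g :: "real \<Rightarrow> real"
  assumes cv: "convex_on UNIV (\<lambda>v. g v - \<theta> / 2 * \<bar>v\<bar>\<^sup>2)"
  shows "g (1/2 * x + 1/2 * y) + \<theta> / 8 * (x - y)\<^sup>2 \<le> (g x + g y) / 2"
proof -
  have "g ((1 - 1/2) *\<^sub>R x + (1/2) *\<^sub>R y) - \<theta> / 2 * \<bar>(1 - 1/2) *\<^sub>R x + (1/2) *\<^sub>R y\<bar>\<^sup>2
     \<le> (1 - 1/2) * (g x - \<theta> / 2 * \<bar>x\<bar>\<^sup>2) + (1/2) * (g y - \<theta> / 2 * \<bar>y\<bar>\<^sup>2)"
    by (rule convex_onD[OF cv]) auto
  then have h: "g (1/2 * x + 1/2 * y) - \<theta> / 2 * (1/2 * x + 1/2 * y)\<^sup>2 \<le> 1/2 * (g x - \<theta> / 2 * x\<^sup>2) + 1/2 * (g y - \<theta> / 2 * y\<^sup>2)"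
    by simp
  have e: "\<theta> / 8 * (x - y)\<^sup>2 = 1/2 * (\<theta> / 2 * x\<^sup>2) + 1/2 * (\<theta> / 2 * y\<^sup>2) - \<theta> / 2 * (1/2 * x + 1/2 * y)\<^sup>2"
    by (simp add: power2_eq_square algebra_simps)
  show ?thesis using h e by argo
qed

theorem proposition3p2:
  fixes M :: "'a measure" and B :: "real \<Rightarrow> 'a \<Rightarrow> real" and T :: real
    and L Lx Lv :: "real \<Rightarrow> real \<Rightarrow> real" and \<Psi> \<Psi>' :: "real \<Rightarrow> real"
    and x0 :: real and \<pi> :: "real \<Rightarrow> 'a \<Rightarrow> real"
  defines "F \<equiv> brownian_filtration M B"
  assumes T: "T > 0"
    and bm: "brownian_motion M B"
    and complete: "complete_measure M"
    \<comment> \<open>(i) L is C^1 on R^2 with partial derivatives Lx, Lv, nonnegative, jointly convex\<close>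
    and L_deriv: "\<And>x v. ((\<lambda>p. L (fst p) (snd p)) has_derivative
                        (\<lambda>h. Lx x v * fst h + Lv x v * snd h)) (at (x, v))"
    and Lx_cont: "continuous_on UNIV (\<lambda>p. Lx (fst p) (snd p))"
    and Lv_cont: "continuous_on UNIV (\<lambda>p. Lv (fst p) (snd p))"
    and L_nonneg: "\<And>x v. L x v \<ge> 0"
    and L_convex: "convex_on UNIV (\<lambda>p. L (fst p) (snd p))"
    \<comment> \<open>(ii) Psi is C^1, nonnegative, convex\<close>
    and Psi_deriv: "\<And>x. (\<Psi> has_real_derivative \<Psi>' x) (at x)"
    and Psi'_cont: "continuous_on UNIV \<Psi>'"
    and Psi_nonneg: "\<And>x. \<Psi> x \<ge> 0"
    and Psi_convex: "convex_on UNIV \<Psi>"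
    \<comment> \<open>(iii)\<close>
    and Psi_growth: "\<exists>C Ct. C > 0 \<and> Ct > 0 \<and>
                       (\<forall>x. \<Psi> x \<le> C * (1 + \<bar>x\<bar>\<^sup>2) \<and> \<bar>\<Psi>' x\<bar> \<le> Ct * (1 + \<bar>x\<bar>))"
    \<comment> \<open>(iv)\<close>
    and L_growth: "\<exists>\<beta>t C. \<beta>t > 0 \<and> C > 0 \<and>
                     (\<forall>x v. L x v \<le> \<beta>t * (1 + \<bar>v\<bar>\<^sup>2) \<and>
                            \<bar>Lx x v\<bar> \<le> C * (1 + \<bar>v\<bar>) \<and> \<bar>Lv x v\<bar> \<le> C * (1 + \<bar>v\<bar>))"
    \<comment> \<open>(v)\<close>
    and L_coercive: "\<exists>\<alpha> \<beta>. \<alpha> > 0 \<and> \<beta> \<ge> 0 \<and> (\<forall>x v. \<alpha> * \<bar>v\<bar>\<^sup>2 - \<beta> \<le> L x v)"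
    \<comment> \<open>price process\<close>
    and price: "HF M F T \<pi>"
  shows "\<exists>vs. HF M F T vs \<and>
           (\<forall>v. HF M F T v \<longrightarrow> cost M T L \<Psi> \<pi> x0 vs \<le> cost M T L \<Psi> \<pi> x0 v) \<and>
           ((\<exists>\<theta>>0. \<forall>x. convex_on UNIV (\<lambda>v. L x v - \<theta> / 2 * \<bar>v\<bar>\<^sup>2)) \<longrightarrow>
              (\<forall>w. HF M F T w \<and>
                   (\<forall>v. HF M F T v \<longrightarrow> cost M T L \<Psi> \<pi> x0 w \<le> cost M T L \<Psi> \<pi> x0 v)
                 \<longrightarrow> (AE p in time_space T M. w (fst p) (snd p) = vs (fst p) (snd p))))"
proof -
  obtain C Ct where C: "C > 0" and PsiC: "\<And>x. \<Psi> x \<le> C * (1 + \<bar>x\<bar>\<^sup>2)" using Psi_growth by blast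
  obtain \<beta>t C2 where Lup: "\<And>x v. L x v \<le> \<beta>t * (1 + \<bar>v\<bar>\<^sup>2)" using L_growth by blast
  obtain \<alpha> \<beta> where \<alpha>: "\<alpha> > 0" and Llow: "\<And>x v. \<alpha> * \<bar>v\<bar>\<^sup>2 - \<beta> \<le> L x v" using L_coercive by blast
  define l where "l v = L 0 v" for v
  have Lc: "L x v = l v" for x v
  proof -
    have "L x v = L 0 v"
      using convex_bounded_above_const[where g = "\<lambda>x. L x v" and K = "\<beta>t * (1 + \<bar>v\<bar>\<^sup>2)" and x = x and y = 0,
          OF convex_slice_fst[OF L_convex]] Lup by blast
    then show ?thesis by (simp add: l_def)
  qed
  have l_convex: "convex_on UNIV l" unfolding l_def[abs_def] by (rule convex_slice_snd[OF L_convex])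
  have l_cont: "continuous_on UNIV l" by (rule convex_on_continuous[OF open_UNIV l_convex])
  have Psi_cont: "continuous_on UNIV \<Psi>" by (rule convex_on_continuous[OF open_UNIV Psi_convex])
  have prob: "prob_space M" using bm by (simp add: brownian_motion_def)
  interpret ctrl M F T l \<Psi> \<pi> x0 \<alpha> \<beta> \<beta>t C
  proof (rule ctrl.intro)
    show "prob_space M" by (rule prob)
    show "0 < T" by (rule T)
    show "continuous_on UNIV l" by (rule l_cont)
    show "0 \<le> l v" for v unfolding l_def by (rule L_nonneg)
    show "convex_on UNIV l" by (rule l_convex)
    show "l v \<le> \<beta>t * (1 + v\<^sup>2)" for v using Lup[of 0 v] by (simp add: l_def)
    show "\<alpha> * v\<^sup>2 - \<beta> \<le> l v" for v using Llow[of v 0] by (simp add: l_def)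
    show "0 < \<alpha>" by (rule \<alpha>)
    show "continuous_on UNIV \<Psi>" by (rule Psi_cont)
    show "0 \<le> \<Psi> x" for x by (rule Psi_nonneg)
    show "convex_on UNIV \<Psi>" by (rule Psi_convex)
    show "\<Psi> x \<le> C * (1 + x\<^sup>2)" for x using PsiC[of x] by simp
    show "HF M F T \<pi>" by (rule price)
  qed
  obtain vs where vs: "HF M F T vs" and vsmin: "\<forall>v. HF M F T v \<longrightarrow> J vs \<le> J v"
    using exists_min by blast
  have cJ: "HF M F T v \<Longrightarrow> cost M T L \<Psi> \<pi> x0 v = J v" for v by (rule cost_J[OF Lc])
  show ?thesis
  proof (intro exI conjI allI impI)
    show "HF M F T vs" by (rule vs)
    fix v assume "HF M F T v"
    then show "cost M T L \<Psi> \<pi> x0 vs \<le> cost M T L \<Psi> \<pi> x0 v" using vsmin cJ vs by simp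
  next
    fix w
    assume th: "\<exists>\<theta>>0. \<forall>x. convex_on UNIV (\<lambda>v. L x v - \<theta> / 2 * \<bar>v\<bar>\<^sup>2)"
      and wm: "HF M F T w \<and> (\<forall>v. HF M F T v \<longrightarrow> cost M T L \<Psi> \<pi> x0 w \<le> cost M T L \<Psi> \<pi> x0 v)"
    obtain \<theta> where \<theta>: "\<theta> > 0" and cv: "\<forall>x. convex_on UNIV (\<lambda>v. L x v - \<theta> / 2 * \<bar>v\<bar>\<^sup>2)" using th by blast
    have cv0: "convex_on UNIV (\<lambda>v. l v - \<theta> / 2 * \<bar>v\<bar>\<^sup>2)" using cv unfolding l_def by blast
    have w: "HF M F T w" using wm by blast
    have wmin: "\<forall>v. HF M F T v \<longrightarrow> J w \<le> J v"
    proof (intro allI impI)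
      fix v assume "HF M F T v"
      then have "cost M T L \<Psi> \<pi> x0 w \<le> cost M T L \<Psi> \<pi> x0 v" using wm by blast
      then show "J w \<le> J v" using cJ[OF w] cJ[OF \<open>HF M F T v\<close>] by simp
    qed
    show "AE p in time_space T M. w (fst p) (snd p) = vs (fst p) (snd p)"
      by (rule unique[OF \<theta> strong_from_convex[OF cv0] vs vsmin w wmin])
  qed
qed



end
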